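(* Let $\Theta \subseteq \mathbb{R}^d$, let $U:\mathbb{R}^d \to \mathbb{R}$ be a differentiable energy function, and fix a step size $\epsilon>0$, a momentum scale $\sigma>0$, a friction parameter $\beta>0$ and an integer $T \ge 1$. Let $\pi(\theta) \propto \exp(-U(\theta))$ on $\Theta$, and let $\pi(\theta, r) \propto \exp\!\big(-U(\theta) - \tfrac{1}{2\sigma^2}\|r\|^2\big)$ on $\Theta \times \mathbb{R}^d$. Consider the Markov chain (AMAGOLD) whose state is $(\theta, r) \in \Theta\times\mathbb{R}^d$ and one transition of which is: 1. (Optionally) resample the momentum $r \sim \mathcal{N}(0, \sigma^2 I)$. 2. Set $r_{-1/2} = r$, $\rho_{-1/2} = 0$, and $\theta_0 = \theta + \tfrac12 \epsilon \sigma^{-2} r_{-1/2}$. 3. For $t = 0, 1, \ldots, T-1$: if $t \neq 0$, set $\theta_t = \theta_{t-1} + \epsilon \sigma^{-2} r_{t-1/2}$; sample $\eta_t \sim \mathcal{N}(0, 4\epsilon\beta\sigma^2 I)$; sample a random energy component $\tilde U_t$; set $r_{t+1/2} = \big((1-\epsilon\beta) r_{t-1/2} - \epsilon \nabla \tilde U_t(\theta_t) + \eta_t\big)/(1+\epsilon\beta)$ and $\rho_{t+1/2} = \rho_{t-1/2} + \tfrac12 \epsilon\sigma^{-2} \nabla \tilde U_t(\theta_t)^{\top}(r_{t-1/2} + r_{t+1/2})$. 4. Set $\theta_T = \theta_{T-1} + \tfrac12 \epsilon\sigma^{-2} r_{T-1/2}$, $\theta^* = \theta_T$, $r^* = r_{T-1/2}$,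 and $a = \exp\big(U(\theta) - U(\theta^* ) + \rho_{T-1/2}\big)$. 5. With probability $\min(1,a)$ (and provided $\theta^* \in \Theta$) move to $(\theta, r) \leftarrow (\theta^*, r^* )$; otherwise set $r \leftarrow -r_{-1/2}$ (keeping $\theta$). If the momentum is resampled in step 1 at every transition, then this Markov chain (viewed as a chain on $\theta$) is reversible with stationary distribution $\pi(\theta)$. If the momentum is not resampled, the Markov chain on $(\theta, r)$ is skew-reversible with respect to the involution $(\theta,r)^\perp = (\theta,-r)$, and its stationary distribution is $\pi(\theta, r)$ (whose $\theta$-marginal is $\pi(\theta)$).
   Context: The random energy components $\tilde U_0, \ldots, \tilde U_{T-1}$ are random differentiable functions (e.g. minibatch estimates $\tilde U(\theta) = -\frac{|\mathcal D|}{|\tilde{\mathcal D}|}\sum_{x\in\tilde{\mathcal D}} \log p(x\mid\theta) - \log p(\theta)$ of $U(\theta) = -\sum_{x\in\mathcal D}\log p(x\mid\theta) - \log p(\theta)$) drawn i.i.d. from a fixed distribution, independently of the state and of the Gaussian noise. A Markov chain with transition kernel $G$ is reversible with respect to $\pi$ if $\pi(x)G(x,y) = \pi(y)G(y,x)$ for all states $x,y$. Given a measure-preserving involution $x \mapsto x^\perp$ of the state space, $G$ is skew-reversible if $\pi(x) = \pi(x^\perp)$ and $\pi(x) G(x,y) = \pi(y^\perp) G(y^\perp, x^\perp)$ for all $x, y$. *)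

theory Defs
  imports "HOL-Probability.Probability"
begin

definition gauss_vec :: "real \<Rightarrow> (real^'d) measure" where
  "gauss_vec s = density lborel (\<lambda>x. ennreal (\<Prod>i\<in>UNIV. normal_density 0 s (x $ i)))"

definition mom_upd :: "real \<Rightarrow> real \<Rightarrow> (real^'d) \<Rightarrow> (real^'d) \<Rightarrow> (real^'d) \<Rightarrow> (real^'d)" where
  "mom_upd eps beta g eta rm =
     (1 / (1 + eps * beta)) *\<^sub>R ((1 - eps * beta) *\<^sub>R rm - eps *\<^sub>R g + eta)"

definition rho_upd :: "real \<Rightarrow> real \<Rightarrow> (real^'d) \<Rightarrow> (real^'d) \<Rightarrow> (real^'d) \<Rightarrow> real \<Rightarrow> real" where
  "rho_upd eps sig g rm rp rhom = rhom + (eps / (2 * sig\<^sup>2)) * (g \<bullet> (rm + rp))"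

text \<open>amag_pre ... t = (theta_t, r_{t-1/2}, rho_{t-1/2}) for the inner loop
  (eta t = eta_t, u t = index of the random energy component U~_t,
   gU u = gradient of U~ indexed by u).\<close>
fun amag_pre :: "real \<Rightarrow> real \<Rightarrow> real \<Rightarrow> ('u \<Rightarrow> (real^'d) \<Rightarrow> (real^'d)) \<Rightarrow> (real^'d) \<Rightarrow> (real^'d)
    \<Rightarrow> (nat \<Rightarrow> (real^'d)) \<Rightarrow> (nat \<Rightarrow> 'u) \<Rightarrow> nat \<Rightarrow> (real^'d) \<times> (real^'d) \<times> real" where
  "amag_pre eps sig beta gU th r eta u 0 = (th + (eps / (2 * sig\<^sup>2)) *\<^sub>R r, r, 0)"
| "amag_pre eps sig beta gU th r eta u (Suc t) =
     (case amag_pre eps sig beta gU th r eta u t of (tht, rm, rhom) \<Rightarrow>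
        let g = gU (u t) tht; rp = mom_upd eps beta g (eta t) rm
        in (tht + (eps / sig\<^sup>2) *\<^sub>R rp, rp, rho_upd eps sig g rm rp rhom))"

text \<open>Proposal (theta*, r*, rho_{T-1/2}) after the last inner step t = T-1 and the
  final half position step theta_T = theta_{T-1} + eps/(2 sig^2) r_{T-1/2}.\<close>
definition amag_prop :: "real \<Rightarrow> real \<Rightarrow> real \<Rightarrow> ('u \<Rightarrow> (real^'d) \<Rightarrow> (real^'d)) \<Rightarrow> (real^'d) \<Rightarrow> (real^'d)
    \<Rightarrow> (nat \<Rightarrow> (real^'d)) \<Rightarrow> (nat \<Rightarrow> 'u) \<Rightarrow> nat \<Rightarrow> (real^'d) \<times> (real^'d) \<times> real" where
  "amag_prop eps sig beta gU th r eta u T =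
     (case amag_pre eps sig beta gU th r eta u (T - 1) of (tht, rm, rhom) \<Rightarrow>
        let g = gU (u (T - 1)) tht; rp = mom_upd eps beta g (eta (T - 1)) rm
        in (tht + (eps / (2 * sig\<^sup>2)) *\<^sub>R rp, rp, rho_upd eps sig g rm rp rhom))"

text \<open>One AMAGOLD transition (steps 2-5) from state (th, r), given the noise
  w t = (eta_t, u_t) and a uniform variable v in [0,1] used for the accept test.\<close>
definition amag_step :: "(real^'d) set \<Rightarrow> ((real^'d) \<Rightarrow> real) \<Rightarrow> real \<Rightarrow> real \<Rightarrow> real
    \<Rightarrow> ('u \<Rightarrow> (real^'d) \<Rightarrow> (real^'d)) \<Rightarrow> nat \<Rightarrow> (real^'d) \<times> (real^'d)
    \<Rightarrow> (nat \<Rightarrow> (real^'d) \<times> 'u) \<times> real \<Rightarrow> (real^'d) \<times> (real^'d)" where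
  "amag_step Theta U eps sig beta gU T x \<omega> =
     (case x of (th, r) \<Rightarrow> case \<omega> of (w, v) \<Rightarrow>
      case amag_prop eps sig beta gU th r (\<lambda>t. fst (w t)) (\<lambda>t. snd (w t)) T of
        (ths, rs, rhos) \<Rightarrow>
          if ths \<in> Theta \<and> v < min 1 (exp (U th - U ths + rhos)) then (ths, rs) else (th, - r))"

definition amag_noise :: "real \<Rightarrow> real \<Rightarrow> real \<Rightarrow> 'u measure \<Rightarrow> nat
    \<Rightarrow> ((nat \<Rightarrow> (real^'d) \<times> 'u) \<times> real) measure" where
  "amag_noise eps sig beta Q T =
     (PiM {..<T} (\<lambda>_. (gauss_vec (sqrt (4 * eps * beta * sig\<^sup>2)) :: (real^'d) measure) \<Otimes>\<^sub>M Q))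
       \<Otimes>\<^sub>M uniform_measure lborel {0..1::real}"

definition amag_kernel :: "(real^'d) set \<Rightarrow> ((real^'d) \<Rightarrow> real) \<Rightarrow> real \<Rightarrow> real \<Rightarrow> real
    \<Rightarrow> ('u \<Rightarrow> (real^'d) \<Rightarrow> (real^'d)) \<Rightarrow> 'u measure \<Rightarrow> nat
    \<Rightarrow> (real^'d) \<times> (real^'d) \<Rightarrow> ((real^'d) \<times> (real^'d)) measure" where
  "amag_kernel Theta U eps sig beta gU Q T x =
     distr (amag_noise eps sig beta Q T) borel (amag_step Theta U eps sig beta gU T x)"

definition amag_kernel_resample :: "(real^'d) set \<Rightarrow> ((real^'d) \<Rightarrow> real) \<Rightarrow> real \<Rightarrow> real \<Rightarrow> real
    \<Rightarrow> ('u \<Rightarrow> (real^'d) \<Rightarrow> (real^'d)) \<Rightarrow> 'u measure \<Rightarrow> nat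
    \<Rightarrow> (real^'d) \<Rightarrow> (real^'d) measure" where
  "amag_kernel_resample Theta U eps sig beta gU Q T th =
     distr (gauss_vec sig \<Otimes>\<^sub>M amag_noise eps sig beta Q T) borel
       (\<lambda>(r, \<omega>). fst (amag_step Theta U eps sig beta gU T (th, r) \<omega>))"

definition pi_theta :: "(real^'d) set \<Rightarrow> ((real^'d) \<Rightarrow> real) \<Rightarrow> (real^'d) \<Rightarrow> real" where
  "pi_theta Theta U th =
     indicator Theta th * exp (- U th) / (\<integral>t. indicator Theta t * exp (- U t) \<partial>lborel)"

definition pi_state :: "(real^'d) set \<Rightarrow> ((real^'d) \<Rightarrow> real) \<Rightarrow> real \<Rightarrow> (real^'d) \<times> (real^'d) \<Rightarrow> real" where
  "pi_state Theta U sig x =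
     indicator Theta (fst x) * exp (- U (fst x) - (norm (snd x))\<^sup>2 / (2 * sig\<^sup>2)) /
     (\<integral>(y::(real^'d) \<times> (real^'d)). indicator Theta (fst y) * exp (- U (fst y) - (norm (snd y))\<^sup>2 / (2 * sig\<^sup>2)) \<partial>lborel)"

definition flip :: "(real^'d) \<times> (real^'d) \<Rightarrow> (real^'d) \<times> (real^'d)" where
  "flip x = (fst x, - snd x)"

end

theory Submission
  imports Defs
begin

definition gdens :: "real \<Rightarrow> real^'d \<Rightarrow> real" where
  "gdens s x = (\<Prod>i\<in>UNIV. normal_density 0 s (x $ i))"

lemma gdens_nonneg: "0 \<le> gdens s x"
  unfolding gdens_def by (auto intro: prod_nonneg)

lemma gdens_meas[measurable]: "gdens s \<in> borel_measurable borel"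
  unfolding gdens_def by measurable

lemma norm_sq_vec: "(norm (x::real^'d))\<^sup>2 = (\<Sum>i\<in>UNIV. (x $ i)\<^sup>2)"
  by (simp only: power2_norm_eq_inner) (simp add: inner_vec_def power2_eq_square)

lemma gdens_eq: "gdens s x = (1 / sqrt (2 * pi * s\<^sup>2)) ^ CARD('d) * exp (- (norm x)\<^sup>2 / (2 * s\<^sup>2))"
  for x :: "real^'d"
proof -
  have "gdens s x = (\<Prod>i\<in>UNIV. (1 / sqrt (2 * pi * s\<^sup>2)) * exp (- (x $ i)\<^sup>2 / (2 * s\<^sup>2)))"
    unfolding gdens_def normal_density_def by simp
  also have "\<dots> = (1 / sqrt (2 * pi * s\<^sup>2)) ^ CARD('d) * (\<Prod>i\<in>UNIV. exp (- (x $ i)\<^sup>2 / (2 * s\<^sup>2)))"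
    by (simp only: prod.distrib prod_constant card_UNIV)
  also have "(\<Prod>i\<in>UNIV. exp (- (x $ i)\<^sup>2 / (2 * s\<^sup>2))) = exp (\<Sum>i\<in>UNIV. - (x $ i)\<^sup>2 / (2 * s\<^sup>2))"
    by (simp add: exp_sum)
  also have "(\<Sum>i\<in>UNIV. - (x $ i)\<^sup>2 / (2 * s\<^sup>2)) = - (norm x)\<^sup>2 / (2 * s\<^sup>2)"
    by (simp add: norm_sq_vec sum_divide_distrib[symmetric] sum_negf)
  finally show ?thesis .
qed

lemma prod_basis_vec: "(\<Prod>b\<in>(Basis :: (real^'d) set). f (x \<bullet> b)) = (\<Prod>i\<in>UNIV. f (x $ i))"
  for x :: "real^'d"
proof -
  have B: "(Basis :: (real^'d) set) = (\<lambda>i. axis i 1) ` UNIV"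
    by (auto simp: Basis_vec_def)
  have inj: "inj (\<lambda>i::'d. axis i (1::real))"
    by (auto intro!: injI simp: axis_eq_axis)
  show ?thesis unfolding B by (subst prod.reindex[OF inj]) (simp add: inner_axis)
qed

lemma nn_integral_gdens: assumes s: "s > 0" shows "(\<integral>\<^sup>+x. ennreal (gdens s x) \<partial>(lborel :: (real^'d) measure)) = 1"
proof -
  have "(\<integral>\<^sup>+x. ennreal (gdens s x) \<partial>(lborel :: (real^'d) measure))
     = (\<integral>\<^sup>+x. (\<Prod>b\<in>(Basis :: (real^'d) set). ennreal (normal_density 0 s (x \<bullet> b))) \<partial>lborel)"
    by (simp add: gdens_def prod_basis_vec prod_ennreal normal_density_nonneg)
  also have "\<dots> = (\<Prod>b\<in>(Basis :: (real^'d) set). (\<integral>\<^sup>+x. ennreal (normal_density 0 s x) \<partial>lborel))"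
    by (rule nn_integral_lborel_prod) auto
  also have "(\<integral>\<^sup>+x. ennreal (normal_density 0 s x) \<partial>lborel) = 1"
    by (subst nn_integral_eq_integral) (auto simp: normal_density_nonneg integrable_normal_density[OF s] integral_normal_density[OF s])
  finally show ?thesis by simp
qed

lemma gauss_vec_density: "gauss_vec s = density lborel (\<lambda>x. ennreal (gdens s x))"
  unfolding gauss_vec_def gdens_def ..

lemma prob_space_gauss_vec: "s > 0 \<Longrightarrow> prob_space (gauss_vec s :: (real^'d) measure)"
  by (rule prob_spaceI) (simp add: gauss_vec_density emeasure_density nn_integral_gdens)

lemma meas_prod_lborel:
  fixes H :: "('a::euclidean_space \<times> 'b::euclidean_space) \<Rightarrow> ennreal"
  shows "H \<in> borel_measurable borel \<Longrightarrow> H \<in> borel_measurable (lborel \<Otimes>\<^sub>M lborel)"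
  by (simp add: lborel_prod)

lemma flip_meas[measurable]: "flip \<in> borel \<rightarrow>\<^sub>M borel"
  unfolding flip_def by (simp add: borel_prod[symmetric])

lemma nn_integral_lborel_affine:
  fixes H :: "'a::euclidean_space \<Rightarrow> ennreal"
  assumes a: "a \<noteq> 0" and H[measurable]: "H \<in> borel_measurable borel"
  shows "(\<integral>\<^sup>+x. H x \<partial>lborel) = ennreal (\<bar>a\<bar>^DIM('a)) * (\<integral>\<^sup>+x. H (t + a *\<^sub>R x) \<partial>lborel)"
proof -
  have "(\<integral>\<^sup>+x. H x \<partial>lborel) = (\<integral>\<^sup>+x. H x \<partial>density (distr lborel borel (\<lambda>x. t + a *\<^sub>R x)) (\<lambda>_. \<bar>a\<bar>^DIM('a)))"
    using lborel_affine[OF a, of t] by simp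
  also have "\<dots> = (\<integral>\<^sup>+x. ennreal (\<bar>a\<bar>^DIM('a)) * H x \<partial>distr lborel borel (\<lambda>x. t + a *\<^sub>R x))"
    by (subst nn_integral_density) auto
  also have "\<dots> = (\<integral>\<^sup>+x. ennreal (\<bar>a\<bar>^DIM('a)) * H (t + a *\<^sub>R x) \<partial>lborel)"
    by (subst nn_integral_distr) auto
  also have "\<dots> = ennreal (\<bar>a\<bar>^DIM('a)) * (\<integral>\<^sup>+x. H (t + a *\<^sub>R x) \<partial>lborel)"
    by (subst nn_integral_cmult) auto
  finally show ?thesis .
qed

lemma nn_integral_lborel_transl:
  fixes H :: "'a::euclidean_space \<Rightarrow> ennreal"
  assumes H[measurable]: "H \<in> borel_measurable borel"
  shows "(\<integral>\<^sup>+x. H x \<partial>lborel) = (\<integral>\<^sup>+x. H (t + x) \<partial>lborel)"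
  using nn_integral_lborel_affine[of 1 H t] by simp

lemma nn_integral_lborel_neg:
  fixes H :: "'a::euclidean_space \<Rightarrow> ennreal"
  assumes H[measurable]: "H \<in> borel_measurable borel"
  shows "(\<integral>\<^sup>+x. H x \<partial>lborel) = (\<integral>\<^sup>+x. H (- x) \<partial>lborel)"
  using nn_integral_lborel_affine[of "-1" H 0] by simp

lemma nn_integral_lborel_pair:
  fixes H :: "('a::euclidean_space \<times> 'b::euclidean_space) \<Rightarrow> ennreal"
  assumes H[measurable]: "H \<in> borel_measurable borel"
  shows "(\<integral>\<^sup>+x. H x \<partial>lborel) = (\<integral>\<^sup>+q. \<integral>\<^sup>+p. H (q, p) \<partial>lborel \<partial>lborel)"
proof -
  have "(\<integral>\<^sup>+x. H x \<partial>lborel) = (\<integral>\<^sup>+x. H x \<partial>(lborel \<Otimes>\<^sub>M lborel))"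
    by (simp add: lborel_prod)
  also have "\<dots> = (\<integral>\<^sup>+q. \<integral>\<^sup>+p. H (q, p) \<partial>lborel \<partial>lborel)"
    by (subst lborel.nn_integral_fst[symmetric]) (auto intro: meas_prod_lborel)
  finally show ?thesis .
qed

lemma nn_integral_lborel_swap:
  fixes H :: "'a::euclidean_space \<Rightarrow> 'b::euclidean_space \<Rightarrow> ennreal"
  assumes H[measurable]: "(\<lambda>(x,y). H x y) \<in> borel_measurable borel"
  shows "(\<integral>\<^sup>+x. \<integral>\<^sup>+y. H x y \<partial>lborel \<partial>lborel) = (\<integral>\<^sup>+y. \<integral>\<^sup>+x. H x y \<partial>lborel \<partial>lborel)"
  by (rule lborel_pair.Fubini'[symmetric]) (rule meas_prod_lborel[OF H])

lemma nn_integral_lborel_flip: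
  fixes H :: "((real^'d) \<times> (real^'d)) \<Rightarrow> ennreal"
  assumes H[measurable]: "H \<in> borel_measurable borel"
  shows "(\<integral>\<^sup>+x. H x \<partial>lborel) = (\<integral>\<^sup>+x. H (flip x) \<partial>lborel)"
proof -
  have "(\<integral>\<^sup>+x. H x \<partial>lborel) = (\<integral>\<^sup>+q. \<integral>\<^sup>+p. H (q, p) \<partial>lborel \<partial>lborel)"
    by (rule nn_integral_lborel_pair) simp
  also have "\<dots> = (\<integral>\<^sup>+q. \<integral>\<^sup>+p. H (q, - p) \<partial>lborel \<partial>lborel)"
    by (intro nn_integral_cong nn_integral_lborel_neg) simp
  also have "\<dots> = (\<integral>\<^sup>+x. H (flip x) \<partial>lborel)"
  proof -
    have m: "(\<lambda>x. H (flip x)) \<in> borel_measurable borel" by measurable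
    show ?thesis by (subst nn_integral_lborel_pair[OF m]) (simp add: flip_def)
  qed
  finally show ?thesis .
qed

lemma fst_borel_meas[measurable]: "(fst :: ('a::second_countable_topology \<times> 'b::second_countable_topology) \<Rightarrow> 'a) \<in> borel_measurable borel"
  by (simp add: borel_prod[symmetric])
lemma snd_borel_meas[measurable]: "(snd :: ('a::second_countable_topology \<times> 'b::second_countable_topology) \<Rightarrow> 'b) \<in> borel_measurable borel"
  by (simp add: borel_prod[symmetric])

lemma test: fixes H :: "((real^'d) \<times> (real^'d)) \<times> real \<Rightarrow> ennreal"
  assumes [measurable]: "H \<in> borel_measurable borel"
  shows "(\<lambda>x. H ((fst x + snd x, - snd x), norm (fst x))) \<in> borel_measurable borel"
  by measurable

definition hh :: "real \<Rightarrow> real \<Rightarrow> real" where "hh eps sig = eps / (2 * sig\<^sup>2)"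
definition kin :: "real \<Rightarrow> real^'d \<Rightarrow> real" where "kin sig p = (norm p)\<^sup>2 / (2 * sig\<^sup>2)"

definition LSG :: "real \<Rightarrow> real \<Rightarrow> real \<Rightarrow> (real^'d \<Rightarrow> real^'d) \<Rightarrow> (real^'d) \<times> (real^'d) \<Rightarrow> real^'d \<Rightarrow> (real^'d) \<times> (real^'d)" where
  "LSG eps sig beta G x e = (let q1 = fst x + hh eps sig *\<^sub>R snd x; p' = mom_upd eps beta (G q1) e (snd x)
     in (q1 + hh eps sig *\<^sub>R p', p'))"

definition LWG :: "real \<Rightarrow> real \<Rightarrow> real \<Rightarrow> (real^'d \<Rightarrow> real^'d) \<Rightarrow> (real^'d) \<times> (real^'d) \<Rightarrow> real^'d \<Rightarrow> real" where
  "LWG eps sig beta G x e = (let q1 = fst x + hh eps sig *\<^sub>R snd x; p' = mom_upd eps beta (G q1) e (snd x)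
     in kin sig p' - kin sig (snd x) + rho_upd eps sig (G q1) (snd x) p' 0)"

definition EE :: "real \<Rightarrow> real \<Rightarrow> (real^'d \<Rightarrow> real^'d) \<Rightarrow> real^'d \<Rightarrow> real^'d \<Rightarrow> real^'d \<Rightarrow> real^'d" where
  "EE eps beta G q1 p p' = (1 + eps * beta) *\<^sub>R p' - (1 - eps * beta) *\<^sub>R p + eps *\<^sub>R G q1"

definition WW :: "real \<Rightarrow> real \<Rightarrow> (real^'d \<Rightarrow> real^'d) \<Rightarrow> real^'d \<Rightarrow> real^'d \<Rightarrow> real^'d \<Rightarrow> real" where
  "WW eps sig G q1 p p' = kin sig p' - kin sig p + rho_upd eps sig (G q1) p p' 0"

lemma kin_meas[measurable]: "kin sig \<in> borel_measurable borel"
  unfolding kin_def by measurable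

lemma mom_upd_meas[measurable]: "(\<lambda>x. mom_upd eps beta (f x) (g x) (k x)) \<in> borel_measurable M"
  if [measurable]: "f \<in> borel_measurable M" "g \<in> borel_measurable M" "k \<in> borel_measurable M"
  for f g k :: "'a \<Rightarrow> real^'d"
  unfolding mom_upd_def by measurable

lemma rho_upd_meas[measurable]: "(\<lambda>x. rho_upd eps sig (f x) (g x) (k x) (r x)) \<in> borel_measurable M"
  if [measurable]: "f \<in> borel_measurable M" "g \<in> borel_measurable M" "k \<in> borel_measurable M" "r \<in> borel_measurable M"
  for f g k :: "'a \<Rightarrow> real^'d"
  unfolding rho_upd_def by measurable

lemma mom_upd_inv:
  assumes "eps * beta > 0"
  shows "mom_upd eps beta g ((eps *\<^sub>R g - (1 - eps * beta) *\<^sub>R p) + (1 + eps * beta) *\<^sub>R p') p = p'"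
proof -
  have ne: "1 + eps * beta \<noteq> 0" using assms by simp
  have "mom_upd eps beta g ((eps *\<^sub>R g - (1 - eps * beta) *\<^sub>R p) + (1 + eps * beta) *\<^sub>R p') p
      = (1 / (1 + eps * beta)) *\<^sub>R ((1 + eps * beta) *\<^sub>R p')"
    unfolding mom_upd_def by (simp add: algebra_simps)
  also have "\<dots> = p'" using ne by simp
  finally show ?thesis .
qed

lemma V:
  fixes G :: "real^'d \<Rightarrow> real^'d" and \<Psi> :: "((real^'d) \<times> (real^'d)) \<times> ((real^'d) \<times> (real^'d)) \<times> real \<Rightarrow> ennreal"
  assumes pos: "eps * beta > 0" and sn: "sn > 0"
    and G[measurable]: "G \<in> borel_measurable borel" and Psi[measurable]: "\<Psi> \<in> borel_measurable borel"
  shows "(\<integral>\<^sup>+x. \<integral>\<^sup>+e. \<Psi> (x, LSG eps sig beta G x e, LWG eps sig beta G x e) \<partial>gauss_vec sn \<partial>lborel)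
    = ennreal ((1 + eps * beta) ^ CARD('d)) * (\<integral>\<^sup>+q1. \<integral>\<^sup>+p. \<integral>\<^sup>+p'. ennreal (gdens sn (EE eps beta G q1 p p')) *
        \<Psi> ((q1 - hh eps sig *\<^sub>R p, p), (q1 + hh eps sig *\<^sub>R p', p'), WW eps sig G q1 p p') \<partial>lborel \<partial>lborel \<partial>lborel)"
proof -
  let ?h = "hh eps sig"
  let ?a = "1 + eps * beta"
  let ?C = "ennreal (?a ^ CARD('d))"
  let ?I = "\<lambda>x e. ennreal (gdens sn e) * \<Psi> (x, LSG eps sig beta G x e, LWG eps sig beta G x e)"
  have mI[measurable]: "(\<lambda>(x, e). ?I x e) \<in> borel_measurable (borel \<Otimes>\<^sub>M lborel)"
    unfolding LSG_def LWG_def Let_def by measurable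
  have mI2[measurable]: "(\<lambda>x. \<integral>\<^sup>+e. ?I x e \<partial>lborel) \<in> borel_measurable borel"
    using lborel.borel_measurable_nn_integral_fst[OF mI] by simp
  have "(\<integral>\<^sup>+x. \<integral>\<^sup>+e. \<Psi> (x, LSG eps sig beta G x e, LWG eps sig beta G x e) \<partial>gauss_vec sn \<partial>lborel)
      = (\<integral>\<^sup>+x. \<integral>\<^sup>+e. ?I x e \<partial>lborel \<partial>lborel)"
    unfolding gauss_vec_density
    by (intro nn_integral_cong, subst nn_integral_density) (auto simp: LSG_def LWG_def Let_def)
  also have "\<dots> = (\<integral>\<^sup>+q. \<integral>\<^sup>+p. \<integral>\<^sup>+e. ?I (q, p) e \<partial>lborel \<partial>lborel \<partial>lborel)"
    by (rule nn_integral_lborel_pair) simp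
  also have "\<dots> = (\<integral>\<^sup>+p. \<integral>\<^sup>+q. \<integral>\<^sup>+e. ?I (q, p) e \<partial>lborel \<partial>lborel \<partial>lborel)"
    by (rule nn_integral_lborel_swap) simp
  also have "\<dots> = (\<integral>\<^sup>+p. \<integral>\<^sup>+q1. \<integral>\<^sup>+e. ?I (- (?h *\<^sub>R p) + q1, p) e \<partial>lborel \<partial>lborel \<partial>lborel)"
    by (intro nn_integral_cong nn_integral_lborel_transl) simp
  also have "\<dots> = (\<integral>\<^sup>+p. \<integral>\<^sup>+q1. ?C * \<integral>\<^sup>+p'. ennreal (gdens sn (EE eps beta G q1 p p')) *
        \<Psi> ((q1 - ?h *\<^sub>R p, p), (q1 + ?h *\<^sub>R p', p'), WW eps sig G q1 p p') \<partial>lborel \<partial>lborel \<partial>lborel)"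
  proof (intro nn_integral_cong)
    fix p q1 :: "real^'d"
    have "(\<integral>\<^sup>+e. ?I (- (?h *\<^sub>R p) + q1, p) e \<partial>lborel)
      = ?C * (\<integral>\<^sup>+p'. ?I (- (?h *\<^sub>R p) + q1, p) ((eps *\<^sub>R G q1 - (1 - eps * beta) *\<^sub>R p) + ?a *\<^sub>R p') \<partial>lborel)"
      using pos by (subst nn_integral_lborel_affine[where a="?a" and t="eps *\<^sub>R G q1 - (1 - eps * beta) *\<^sub>R p"]) auto
    also have "(\<lambda>p'. ?I (- (?h *\<^sub>R p) + q1, p) ((eps *\<^sub>R G q1 - (1 - eps * beta) *\<^sub>R p) + ?a *\<^sub>R p'))
      = (\<lambda>p'. ennreal (gdens sn (EE eps beta G q1 p p')) *
        \<Psi> ((q1 - ?h *\<^sub>R p, p), (q1 + ?h *\<^sub>R p', p'), WW eps sig G q1 p p'))"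
    proof (rule ext)
      fix p'
      let ?t = "eps *\<^sub>R G q1 - (1 - eps * beta) *\<^sub>R p"
      have m: "mom_upd eps beta (G q1) (?t + ?a *\<^sub>R p') p = p'" by (rule mom_upd_inv[OF pos])
      have q: "- (?h *\<^sub>R p) + q1 + ?h *\<^sub>R p = q1" by simp
      have lsg: "LSG eps sig beta G (- (?h *\<^sub>R p) + q1, p) (?t + ?a *\<^sub>R p') = (q1 + ?h *\<^sub>R p', p')"
        unfolding LSG_def Let_def fst_conv snd_conv q m ..
      have lwg: "LWG eps sig beta G (- (?h *\<^sub>R p) + q1, p) (?t + ?a *\<^sub>R p') = WW eps sig G q1 p p'"
        unfolding LWG_def WW_def Let_def fst_conv snd_conv q m ..
      have ee: "?t + ?a *\<^sub>R p' = EE eps beta G q1 p p'" by (simp add: EE_def algebra_simps)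
      have x: "(- (?h *\<^sub>R p) + q1, p) = (q1 - ?h *\<^sub>R p, p)" by simp
      show "?I (- (?h *\<^sub>R p) + q1, p) (?t + ?a *\<^sub>R p') = ennreal (gdens sn (EE eps beta G q1 p p')) *
        \<Psi> ((q1 - ?h *\<^sub>R p, p), (q1 + ?h *\<^sub>R p', p'), WW eps sig G q1 p p')"
        unfolding lsg lwg by (simp only: ee x)
    qed
    finally show "(\<integral>\<^sup>+e. ?I (- (?h *\<^sub>R p) + q1, p) e \<partial>lborel) = ?C * (\<integral>\<^sup>+p'. ennreal (gdens sn (EE eps beta G q1 p p')) *
        \<Psi> ((q1 - ?h *\<^sub>R p, p), (q1 + ?h *\<^sub>R p', p'), WW eps sig G q1 p p') \<partial>lborel)" .
  qed
  also have "\<dots> = (\<integral>\<^sup>+q1. \<integral>\<^sup>+p. ?C * \<integral>\<^sup>+p'. ennreal (gdens sn (EE eps beta G q1 p p')) *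
        \<Psi> ((q1 - ?h *\<^sub>R p, p), (q1 + ?h *\<^sub>R p', p'), WW eps sig G q1 p p') \<partial>lborel \<partial>lborel \<partial>lborel)"
    by (rule nn_integral_lborel_swap[symmetric]) (simp add: EE_def WW_def)
  also have "\<dots> = ?C * (\<integral>\<^sup>+q1. \<integral>\<^sup>+p. \<integral>\<^sup>+p'. ennreal (gdens sn (EE eps beta G q1 p p')) *
        \<Psi> ((q1 - ?h *\<^sub>R p, p), (q1 + ?h *\<^sub>R p', p'), WW eps sig G q1 p p') \<partial>lborel \<partial>lborel \<partial>lborel)"
    by (simp add: nn_integral_cmult EE_def WW_def)
  finally show ?thesis .
qed

lemma EE_norm_identity:
  fixes P P' g :: "real^'d"
  shows "(norm ((1 + c) *\<^sub>R P' - (1 - c) *\<^sub>R P + e *\<^sub>R g))\<^sup>2 - (norm ((1 + c) *\<^sub>R (- P) - (1 - c) *\<^sub>R (- P') + e *\<^sub>R g))\<^sup>2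
    = 4 * c * ((norm P')\<^sup>2 - (norm P)\<^sup>2 + e * (g \<bullet> (P + P')))"
  by (simp only: power2_norm_eq_inner) (simp add: inner_simps inner_commute algebra_simps)

lemma WW_neg: "WW eps sig G q1 (- P') (- P) = - WW eps sig G q1 P P'"
proof -
  have i: "G q1 \<bullet> (- P' + - P) = - (G q1 \<bullet> (P + P'))" by (simp add: inner_add_right inner_diff_right algebra_simps)
  have k: "kin sig (-x) = kin sig x" for x :: "real^'a" by (simp add: kin_def)
  show ?thesis unfolding WW_def rho_upd_def k i by simp
qed

lemma div_comb: "a / d - b / d + (0 + e / d * i) = (a - b + e * i) / (d::real)"
  by (simp add: diff_divide_distrib add_divide_distrib)

lemma aux_key:
  fixes A B D k s :: real
  assumes "k \<noteq> 0" "s \<noteq> 0" "A - B = k * D"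
  shows "- B / (2 * (k * s)) + - (D / (2 * s)) = - A / (2 * (k * s))"
proof -
  have "A = B + k * D" using assms(3) by simp
  then show ?thesis using assms(1,2) by (simp add: field_simps)
qed

lemma gdens_EE:
  fixes G :: "real^'d \<Rightarrow> real^'d"
  assumes c: "eps * beta > 0" and sig: "sig > 0" and sn: "sn = sqrt (4 * eps * beta * sig\<^sup>2)"
  shows "gdens sn (EE eps beta G q1 (- P') (- P)) * exp (WW eps sig G q1 (- P') (- P)) = gdens sn (EE eps beta G q1 P P')"
proof -
  let ?c = "eps * beta"
  have nn0: "0 \<le> 4 * (eps * beta) * sig\<^sup>2" using c by simp
  have nn: "0 \<le> 4 * eps * beta * sig\<^sup>2" using nn0 by (simp add: mult.assoc)
  have sn2: "sn\<^sup>2 = 4 * ?c * sig\<^sup>2" using sn nn by (simp add: mult.assoc)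
  have sig2: "sig\<^sup>2 > 0" using sig by simp
  have key: "- (norm (EE eps beta G q1 (- P') (- P)))\<^sup>2 / (2 * sn\<^sup>2) + WW eps sig G q1 (- P') (- P)
      = - (norm (EE eps beta G q1 P P'))\<^sup>2 / (2 * sn\<^sup>2)"
  proof -
    have id: "(norm (EE eps beta G q1 P P'))\<^sup>2 - (norm (EE eps beta G q1 (- P') (- P)))\<^sup>2
        = 4 * ?c * ((norm P')\<^sup>2 - (norm P)\<^sup>2 + eps * (G q1 \<bullet> (P + P')))"
      unfolding EE_def by (rule EE_norm_identity)
    have w: "WW eps sig G q1 (- P') (- P) = - (((norm P')\<^sup>2 - (norm P)\<^sup>2 + eps * (G q1 \<bullet> (P + P'))) / (2 * sig\<^sup>2))"
      unfolding WW_neg unfolding WW_def kin_def rho_upd_def div_comb by simp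
    show ?thesis unfolding w sn2
      by (rule aux_key[OF _ _ id]) (use c sig2 in auto)
  qed
  show ?thesis
    unfolding gdens_eq mult.assoc exp_add[symmetric] key[symmetric]
    by (simp add: algebra_simps)
qed

lemma swap_neg:
  fixes \<Phi> :: "'a::euclidean_space \<Rightarrow> 'a \<Rightarrow> ennreal"
  assumes m[measurable]: "(\<lambda>(x, y). \<Phi> x y) \<in> borel_measurable borel"
  shows "(\<integral>\<^sup>+p. \<integral>\<^sup>+p'. \<Phi> p p' \<partial>lborel \<partial>lborel) = (\<integral>\<^sup>+P. \<integral>\<^sup>+P'. \<Phi> (- P') (- P) \<partial>lborel \<partial>lborel)"
proof -
  have m'[measurable]: "(\<lambda>(x, y). \<Phi> x y) \<in> borel_measurable (borel \<Otimes>\<^sub>M borel)"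
    using m by (simp add: borel_prod)
  have m1[measurable]: "(\<lambda>p'. \<integral>\<^sup>+p. \<Phi> p p' \<partial>lborel) \<in> borel_measurable borel"
  proof -
    have "(\<lambda>(p', p). \<Phi> p p') \<in> borel_measurable (borel \<Otimes>\<^sub>M lborel)" by measurable
    from lborel.borel_measurable_nn_integral_fst[OF this] show ?thesis by simp
  qed
  have "(\<integral>\<^sup>+p. \<integral>\<^sup>+p'. \<Phi> p p' \<partial>lborel \<partial>lborel) = (\<integral>\<^sup>+p'. \<integral>\<^sup>+p. \<Phi> p p' \<partial>lborel \<partial>lborel)"
    by (rule nn_integral_lborel_swap) simp
  also have "\<dots> = (\<integral>\<^sup>+P. \<integral>\<^sup>+p. \<Phi> p (- P) \<partial>lborel \<partial>lborel)"
    by (rule nn_integral_lborel_neg) simp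
  also have "\<dots> = (\<integral>\<^sup>+P. \<integral>\<^sup>+P'. \<Phi> (- P') (- P) \<partial>lborel \<partial>lborel)"
    by (intro nn_integral_cong nn_integral_lborel_neg) simp
  finally show ?thesis .
qed

lemma SR_G:
  fixes G :: "real^'d \<Rightarrow> real^'d" and F :: "((real^'d) \<times> (real^'d)) \<times> ((real^'d) \<times> (real^'d)) \<times> real \<Rightarrow> ennreal"
  assumes c: "eps * beta > 0" and sig: "sig > 0" and sn: "sn = sqrt (4 * eps * beta * sig\<^sup>2)"
    and G[measurable]: "G \<in> borel_measurable borel" and F[measurable]: "F \<in> borel_measurable borel"
  shows "(\<integral>\<^sup>+x. \<integral>\<^sup>+e. F (x, LSG eps sig beta G x e, LWG eps sig beta G x e) \<partial>gauss_vec sn \<partial>lborel)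
    = (\<integral>\<^sup>+z. \<integral>\<^sup>+e. F (flip (LSG eps sig beta G z e), flip z, - LWG eps sig beta G z e) * ennreal (exp (LWG eps sig beta G z e)) \<partial>gauss_vec sn \<partial>lborel)"
proof -
  have snpos: "sn > 0"
  proof -
    have "0 < 4 * (eps * beta) * sig\<^sup>2" using c sig by simp
    then show ?thesis using sn by (simp add: mult.assoc)
  qed
  let ?h = "hh eps sig"
  let ?C = "ennreal ((1 + eps * beta) ^ CARD('d))"
  define \<Psi> where "\<Psi> = (\<lambda>t :: ((real^'d) \<times> (real^'d)) \<times> ((real^'d) \<times> (real^'d)) \<times> real.
     F (flip (fst (snd t)), flip (fst t), - snd (snd t)) * ennreal (exp (snd (snd t))))"
  have Psi[measurable]: "\<Psi> \<in> borel_measurable borel" unfolding \<Psi>_def by measurable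
  have L: "(\<integral>\<^sup>+x. \<integral>\<^sup>+e. F (x, LSG eps sig beta G x e, LWG eps sig beta G x e) \<partial>gauss_vec sn \<partial>lborel)
     = ?C * (\<integral>\<^sup>+q1. \<integral>\<^sup>+p. \<integral>\<^sup>+p'. ennreal (gdens sn (EE eps beta G q1 p p')) *
        F ((q1 - ?h *\<^sub>R p, p), (q1 + ?h *\<^sub>R p', p'), WW eps sig G q1 p p') \<partial>lborel \<partial>lborel \<partial>lborel)"
    by (rule V[OF c snpos G F])
  have R: "(\<integral>\<^sup>+z. \<integral>\<^sup>+e. F (flip (LSG eps sig beta G z e), flip z, - LWG eps sig beta G z e) * ennreal (exp (LWG eps sig beta G z e)) \<partial>gauss_vec sn \<partial>lborel)
     = ?C * (\<integral>\<^sup>+q1. \<integral>\<^sup>+p. \<integral>\<^sup>+p'. ennreal (gdens sn (EE eps beta G q1 p p')) *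
        \<Psi> ((q1 - ?h *\<^sub>R p, p), (q1 + ?h *\<^sub>R p', p'), WW eps sig G q1 p p') \<partial>lborel \<partial>lborel \<partial>lborel)"
    using V[OF c snpos G Psi] by (simp add: \<Psi>_def)
  have inner: "(\<integral>\<^sup>+p. \<integral>\<^sup>+p'. ennreal (gdens sn (EE eps beta G q1 p p')) *
        \<Psi> ((q1 - ?h *\<^sub>R p, p), (q1 + ?h *\<^sub>R p', p'), WW eps sig G q1 p p') \<partial>lborel \<partial>lborel)
    = (\<integral>\<^sup>+p. \<integral>\<^sup>+p'. ennreal (gdens sn (EE eps beta G q1 p p')) *
        F ((q1 - ?h *\<^sub>R p, p), (q1 + ?h *\<^sub>R p', p'), WW eps sig G q1 p p') \<partial>lborel \<partial>lborel)" for q1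
  proof -
    have "(\<integral>\<^sup>+p. \<integral>\<^sup>+p'. ennreal (gdens sn (EE eps beta G q1 p p')) *
        \<Psi> ((q1 - ?h *\<^sub>R p, p), (q1 + ?h *\<^sub>R p', p'), WW eps sig G q1 p p') \<partial>lborel \<partial>lborel)
      = (\<integral>\<^sup>+P. \<integral>\<^sup>+P'. ennreal (gdens sn (EE eps beta G q1 (- P') (- P))) *
        \<Psi> ((q1 - ?h *\<^sub>R (- P'), - P'), (q1 + ?h *\<^sub>R (- P), - P), WW eps sig G q1 (- P') (- P)) \<partial>lborel \<partial>lborel)"
      by (rule swap_neg) (simp add: EE_def WW_def)
    also have "\<dots> = (\<integral>\<^sup>+P. \<integral>\<^sup>+P'. ennreal (gdens sn (EE eps beta G q1 P P')) *
        F ((q1 - ?h *\<^sub>R P, P), (q1 + ?h *\<^sub>R P', P'), WW eps sig G q1 P P') \<partial>lborel \<partial>lborel)"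
    proof (intro nn_integral_cong)
      fix P P' :: "real^'d"
      have g: "gdens sn (EE eps beta G q1 (- P') (- P)) * exp (WW eps sig G q1 (- P') (- P)) = gdens sn (EE eps beta G q1 P P')"
        by (rule gdens_EE[OF c sig sn])
      have "ennreal (gdens sn (EE eps beta G q1 (- P') (- P))) *
        \<Psi> ((q1 - ?h *\<^sub>R (- P'), - P'), (q1 + ?h *\<^sub>R (- P), - P), WW eps sig G q1 (- P') (- P))
        = ennreal (gdens sn (EE eps beta G q1 (- P') (- P))) * ennreal (exp (WW eps sig G q1 (- P') (- P))) *
          F ((q1 - ?h *\<^sub>R P, P), (q1 + ?h *\<^sub>R P', P'), WW eps sig G q1 P P')"
        by (simp add: \<Psi>_def flip_def WW_neg mult_ac)
      also have "\<dots> = ennreal (gdens sn (EE eps beta G q1 P P')) * F ((q1 - ?h *\<^sub>R P, P), (q1 + ?h *\<^sub>R P', P'), WW eps sig G q1 P P')"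
        by (simp add: ennreal_mult'[symmetric] gdens_nonneg g)
      finally show "ennreal (gdens sn (EE eps beta G q1 (- P') (- P))) *
        \<Psi> ((q1 - ?h *\<^sub>R (- P'), - P'), (q1 + ?h *\<^sub>R (- P), - P), WW eps sig G q1 (- P') (- P))
        = ennreal (gdens sn (EE eps beta G q1 P P')) * F ((q1 - ?h *\<^sub>R P, P), (q1 + ?h *\<^sub>R P', P'), WW eps sig G q1 P P')" .
    qed
    finally show ?thesis .
  qed
  show ?thesis unfolding L R inner ..
qed

type_synonym 'd st = "(real^'d::finite) \<times> (real^'d)"

definition SRp :: "'w measure \<Rightarrow> (('d::finite) st \<Rightarrow> 'w \<Rightarrow> 'd st) \<Rightarrow> ('d st \<Rightarrow> 'w \<Rightarrow> real)
    \<Rightarrow> ('d st \<Rightarrow> 'w \<Rightarrow> 'd st) \<Rightarrow> ('d st \<Rightarrow> 'w \<Rightarrow> real) \<Rightarrow> bool" where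
  "SRp N f wfa g wga \<longleftrightarrow> (\<forall>F :: 'd st \<times> 'd st \<times> real \<Rightarrow> ennreal. F \<in> borel_measurable borel \<longrightarrow>
     (\<integral>\<^sup>+x. \<integral>\<^sup>+\<omega>. F (x, f x \<omega>, wfa x \<omega>) \<partial>N \<partial>lborel)
   = (\<integral>\<^sup>+z. \<integral>\<^sup>+\<omega>. F (flip (g z \<omega>), flip z, - wga z \<omega>) * ennreal (exp (wga z \<omega>)) \<partial>N \<partial>lborel))"

lemma meas2:
  assumes "(\<lambda>(x, \<omega>). f x \<omega>) \<in> borel \<Otimes>\<^sub>M N \<rightarrow>\<^sub>M K" "a \<in> M \<rightarrow>\<^sub>M borel" "b \<in> M \<rightarrow>\<^sub>M N"
  shows "(\<lambda>t. f (a t) (b t)) \<in> M \<rightarrow>\<^sub>M K"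
  using measurable_compose[OF measurable_Pair[OF assms(2,3)] assms(1)] by simp

lemma flip_flip[simp]: "flip (flip x) = x"
  by (simp add: flip_def)

lemma SRp_comp:
  fixes F :: "('d::finite) st \<times> 'd st \<times> real \<Rightarrow> ennreal"
  assumes S1: "SRp N1 f1 w1 g1 v1" and S2: "SRp N2 f2 w2 g2 v2"
    and P1: "prob_space N1" and P2: "prob_space N2"
    and mf1: "(\<lambda>(x, \<omega>). f1 x \<omega>) \<in> borel \<Otimes>\<^sub>M N1 \<rightarrow>\<^sub>M borel"
    and mg1: "(\<lambda>(x, \<omega>). g1 x \<omega>) \<in> borel \<Otimes>\<^sub>M N1 \<rightarrow>\<^sub>M borel"
    and mw1: "(\<lambda>(x, \<omega>). w1 x \<omega>) \<in> borel \<Otimes>\<^sub>M N1 \<rightarrow>\<^sub>M borel"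
    and mv1: "(\<lambda>(x, \<omega>). v1 x \<omega>) \<in> borel \<Otimes>\<^sub>M N1 \<rightarrow>\<^sub>M borel"
    and mf2: "(\<lambda>(x, \<omega>). f2 x \<omega>) \<in> borel \<Otimes>\<^sub>M N2 \<rightarrow>\<^sub>M borel"
    and mg2: "(\<lambda>(x, \<omega>). g2 x \<omega>) \<in> borel \<Otimes>\<^sub>M N2 \<rightarrow>\<^sub>M borel"
    and mw2: "(\<lambda>(x, \<omega>). w2 x \<omega>) \<in> borel \<Otimes>\<^sub>M N2 \<rightarrow>\<^sub>M borel"
    and mv2: "(\<lambda>(x, \<omega>). v2 x \<omega>) \<in> borel \<Otimes>\<^sub>M N2 \<rightarrow>\<^sub>M borel"
    and F[measurable]: "F \<in> borel_measurable borel"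
  shows "(\<integral>\<^sup>+x. \<integral>\<^sup>+\<omega>1. \<integral>\<^sup>+\<omega>2. F (x, f2 (f1 x \<omega>1) \<omega>2, w1 x \<omega>1 + w2 (f1 x \<omega>1) \<omega>2) \<partial>N2 \<partial>N1 \<partial>lborel)
    = (\<integral>\<^sup>+z. \<integral>\<^sup>+\<omega>2. \<integral>\<^sup>+\<omega>1. F (flip (g1 (g2 z \<omega>2) \<omega>1), flip z, - (v2 z \<omega>2 + v1 (g2 z \<omega>2) \<omega>1))
         * ennreal (exp (v2 z \<omega>2 + v1 (g2 z \<omega>2) \<omega>1)) \<partial>N1 \<partial>N2 \<partial>lborel)"
proof -
  interpret N1: prob_space N1 by (rule P1)
  interpret N2: prob_space N2 by (rule P2)
  interpret N12: pair_sigma_finite N1 N2 ..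
  note [measurable (raw)] = meas2[OF mf1] meas2[OF mg1] meas2[OF mw1] meas2[OF mv1]
    meas2[OF mf2] meas2[OF mg2] meas2[OF mw2] meas2[OF mv2]
  define G where "G = (\<lambda>t :: 'd st \<times> 'd st \<times> real. \<integral>\<^sup>+\<omega>2. F (fst t, f2 (fst (snd t)) \<omega>2, snd (snd t) + w2 (fst (snd t)) \<omega>2) \<partial>N2)"
  have Gm[measurable]: "G \<in> borel_measurable borel"
  proof -
    have "(\<lambda>(t, \<omega>2). F (fst t, f2 (fst (snd t)) \<omega>2, snd (snd t) + w2 (fst (snd t)) \<omega>2)) \<in> borel_measurable (borel \<Otimes>\<^sub>M N2)"
      by measurable
    from N2.borel_measurable_nn_integral_fst[OF this] show ?thesis by (simp add: G_def)
  qed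
  have "(\<integral>\<^sup>+x. \<integral>\<^sup>+\<omega>1. \<integral>\<^sup>+\<omega>2. F (x, f2 (f1 x \<omega>1) \<omega>2, w1 x \<omega>1 + w2 (f1 x \<omega>1) \<omega>2) \<partial>N2 \<partial>N1 \<partial>lborel)
      = (\<integral>\<^sup>+x. \<integral>\<^sup>+\<omega>1. G (x, f1 x \<omega>1, w1 x \<omega>1) \<partial>N1 \<partial>lborel)"
    by (simp add: G_def)
  also have "\<dots> = (\<integral>\<^sup>+x. \<integral>\<^sup>+\<omega>1. G (flip (g1 x \<omega>1), flip x, - v1 x \<omega>1) * ennreal (exp (v1 x \<omega>1)) \<partial>N1 \<partial>lborel)"
    using S1 Gm unfolding SRp_def by blast
  also have "\<dots> = (\<integral>\<^sup>+z. \<integral>\<^sup>+\<omega>1. G (flip (g1 (flip z) \<omega>1), z, - v1 (flip z) \<omega>1) * ennreal (exp (v1 (flip z) \<omega>1)) \<partial>N1 \<partial>lborel)"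
  proof -
    have "(\<lambda>(x, \<omega>1). G (flip (g1 x \<omega>1), flip x, - v1 x \<omega>1) * ennreal (exp (v1 x \<omega>1))) \<in> borel_measurable (borel \<Otimes>\<^sub>M N1)"
      by measurable
    from N1.borel_measurable_nn_integral_fst[OF this]
    have "(\<lambda>x. \<integral>\<^sup>+\<omega>1. G (flip (g1 x \<omega>1), flip x, - v1 x \<omega>1) * ennreal (exp (v1 x \<omega>1)) \<partial>N1) \<in> borel_measurable borel"
      by simp
    from nn_integral_lborel_flip[OF this] show ?thesis by simp
  qed
  also have "\<dots> = (\<integral>\<^sup>+z. \<integral>\<^sup>+\<omega>1. \<integral>\<^sup>+\<omega>2. F (flip (g1 (flip z) \<omega>1), f2 z \<omega>2, - v1 (flip z) \<omega>1 + w2 z \<omega>2) * ennreal (exp (v1 (flip z) \<omega>1)) \<partial>N2 \<partial>N1 \<partial>lborel)"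
    by (intro nn_integral_cong) (simp add: G_def nn_integral_multc)
  also have "\<dots> = (\<integral>\<^sup>+z. \<integral>\<^sup>+\<omega>2. \<integral>\<^sup>+\<omega>1. F (flip (g1 (flip z) \<omega>1), f2 z \<omega>2, - v1 (flip z) \<omega>1 + w2 z \<omega>2) * ennreal (exp (v1 (flip z) \<omega>1)) \<partial>N1 \<partial>N2 \<partial>lborel)"
    by (intro nn_integral_cong N12.Fubini'[symmetric]) measurable
  finally have step1: "(\<integral>\<^sup>+x. \<integral>\<^sup>+\<omega>1. \<integral>\<^sup>+\<omega>2. F (x, f2 (f1 x \<omega>1) \<omega>2, w1 x \<omega>1 + w2 (f1 x \<omega>1) \<omega>2) \<partial>N2 \<partial>N1 \<partial>lborel)
     = (\<integral>\<^sup>+z. \<integral>\<^sup>+\<omega>2. \<integral>\<^sup>+\<omega>1. F (flip (g1 (flip z) \<omega>1), f2 z \<omega>2, - v1 (flip z) \<omega>1 + w2 z \<omega>2) * ennreal (exp (v1 (flip z) \<omega>1)) \<partial>N1 \<partial>N2 \<partial>lborel)" .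
  define H where "H = (\<lambda>t :: 'd st \<times> 'd st \<times> real. \<integral>\<^sup>+\<omega>1. F (flip (g1 (flip (fst t)) \<omega>1), fst (snd t), - v1 (flip (fst t)) \<omega>1 + snd (snd t)) * ennreal (exp (v1 (flip (fst t)) \<omega>1)) \<partial>N1)"
  have Hm[measurable]: "H \<in> borel_measurable borel"
  proof -
    have "(\<lambda>(t, \<omega>1). F (flip (g1 (flip (fst t)) \<omega>1), fst (snd t), - v1 (flip (fst t)) \<omega>1 + snd (snd t)) * ennreal (exp (v1 (flip (fst t)) \<omega>1))) \<in> borel_measurable (borel \<Otimes>\<^sub>M N1)"
      by measurable
    from N1.borel_measurable_nn_integral_fst[OF this] show ?thesis by (simp add: H_def)
  qed
  have "(\<integral>\<^sup>+z. \<integral>\<^sup>+\<omega>2. \<integral>\<^sup>+\<omega>1. F (flip (g1 (flip z) \<omega>1), f2 z \<omega>2, - v1 (flip z) \<omega>1 + w2 z \<omega>2) * ennreal (exp (v1 (flip z) \<omega>1)) \<partial>N1 \<partial>N2 \<partial>lborel)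
     = (\<integral>\<^sup>+z. \<integral>\<^sup>+\<omega>2. H (z, f2 z \<omega>2, w2 z \<omega>2) \<partial>N2 \<partial>lborel)"
    by (simp add: H_def)
  also have "\<dots> = (\<integral>\<^sup>+z. \<integral>\<^sup>+\<omega>2. H (flip (g2 z \<omega>2), flip z, - v2 z \<omega>2) * ennreal (exp (v2 z \<omega>2)) \<partial>N2 \<partial>lborel)"
    using S2 Hm unfolding SRp_def by blast
  also have "\<dots> = (\<integral>\<^sup>+z. \<integral>\<^sup>+\<omega>2. \<integral>\<^sup>+\<omega>1. F (flip (g1 (g2 z \<omega>2) \<omega>1), flip z, - (v2 z \<omega>2 + v1 (g2 z \<omega>2) \<omega>1))
         * ennreal (exp (v2 z \<omega>2 + v1 (g2 z \<omega>2) \<omega>1)) \<partial>N1 \<partial>N2 \<partial>lborel)"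
  proof (intro nn_integral_cong)
    fix z \<omega>2
    have c: "\<And>x. - v1 (g2 z \<omega>2) x - v2 z \<omega>2 = - v2 z \<omega>2 - v1 (g2 z \<omega>2) x" by simp
    show "H (flip (g2 z \<omega>2), flip z, - v2 z \<omega>2) * ennreal (exp (v2 z \<omega>2)) =
      (\<integral>\<^sup>+\<omega>1. F (flip (g1 (g2 z \<omega>2) \<omega>1), flip z, - (v2 z \<omega>2 + v1 (g2 z \<omega>2) \<omega>1))
         * ennreal (exp (v2 z \<omega>2 + v1 (g2 z \<omega>2) \<omega>1)) \<partial>N1)"
      unfolding H_def
      by (subst nn_integral_multc[symmetric]) (auto intro!: nn_integral_cong simp: exp_add ennreal_mult' mult_ac c)
  qed
  finally show ?thesis using step1 by simp
qed

lemma sets_gauss_vec[measurable_cong]: "sets (gauss_vec s) = sets borel"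
  by (simp add: gauss_vec_def)

locale amag_loc =
  fixes eps sig beta :: real and Q :: "'u measure" and gU :: "'u \<Rightarrow> real^'d::finite \<Rightarrow> real^'d"
  assumes eps_pos: "eps > 0" and sig_pos: "sig > 0" and beta_pos: "beta > 0"
    and Q_prob: "prob_space Q"
    and gU_meas: "(\<lambda>(u, x). gU u x) \<in> measurable (Q \<Otimes>\<^sub>M borel) borel"
begin

definition "sn = sqrt (4 * eps * beta * sig\<^sup>2)"
definition "N1 = ((gauss_vec sn :: (real^'d) measure) \<Otimes>\<^sub>M Q)"
definition LS :: "'d st \<Rightarrow> (real^'d) \<times> 'u \<Rightarrow> 'd st" where
  "LS x \<omega> = LSG eps sig beta (gU (snd \<omega>)) x (fst \<omega>)"
definition LW :: "'d st \<Rightarrow> (real^'d) \<times> 'u \<Rightarrow> real" where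
  "LW x \<omega> = LWG eps sig beta (gU (snd \<omega>)) x (fst \<omega>)"

lemma gU_comp[measurable (raw)]:
  "f \<in> M \<rightarrow>\<^sub>M Q \<Longrightarrow> g \<in> borel_measurable M \<Longrightarrow> (\<lambda>x. gU (f x) (g x)) \<in> borel_measurable M"
  using measurable_compose[OF measurable_Pair gU_meas, of f M g] by simp

lemma sn_pos: "sn > 0"
proof -
  have "0 < 4 * (eps * beta) * sig\<^sup>2" using eps_pos beta_pos sig_pos by simp
  then show ?thesis by (simp add: sn_def mult.assoc)
qed

lemma prob_gauss: "prob_space (gauss_vec sn :: (real^'d) measure)"
  by (rule prob_space_gauss_vec[OF sn_pos])

lemma prob_N1: "prob_space N1"
  unfolding N1_def using prob_gauss Q_prob by (intro prob_space_pair) auto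

lemma LS_meas: "(\<lambda>(x, \<omega>). LS x \<omega>) \<in> borel \<Otimes>\<^sub>M N1 \<rightarrow>\<^sub>M borel"
  unfolding LS_def LSG_def Let_def N1_def by measurable

lemma LW_meas: "(\<lambda>(x, \<omega>). LW x \<omega>) \<in> borel \<Otimes>\<^sub>M N1 \<rightarrow>\<^sub>M borel"
  unfolding LW_def LWG_def Let_def N1_def by measurable

lemma SR1: "SRp N1 LS LW LS LW"
  unfolding SRp_def
proof (intro allI impI)
  fix F :: "'d st \<times> 'd st \<times> real \<Rightarrow> ennreal"
  assume F[measurable]: "F \<in> borel_measurable borel"
  interpret Gs: prob_space "gauss_vec sn :: (real^'d) measure" by (rule prob_gauss)
  interpret Q: prob_space Q by (rule Q_prob)
  interpret GQ: pair_sigma_finite "gauss_vec sn :: (real^'d) measure" Q ..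
  interpret LQ: pair_sigma_finite "lborel :: 'd st measure" Q ..
  have c: "eps * beta > 0" using eps_pos beta_pos by simp
  have "(\<integral>\<^sup>+x. \<integral>\<^sup>+\<omega>. F (x, LS x \<omega>, LW x \<omega>) \<partial>N1 \<partial>lborel)
     = (\<integral>\<^sup>+x. \<integral>\<^sup>+u. \<integral>\<^sup>+e. F (x, LSG eps sig beta (gU u) x e, LWG eps sig beta (gU u) x e) \<partial>gauss_vec sn \<partial>Q \<partial>lborel)"
    unfolding N1_def LS_def LW_def
  proof (intro nn_integral_cong)
    fix x
    have m: "(\<lambda>\<omega>. F (x, LSG eps sig beta (gU (snd \<omega>)) x (fst \<omega>), LWG eps sig beta (gU (snd \<omega>)) x (fst \<omega>)))
      \<in> borel_measurable ((gauss_vec sn :: (real^'d) measure) \<Otimes>\<^sub>M Q)"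
      by (simp add: LSG_def LWG_def Let_def)
    show "(\<integral>\<^sup>+\<omega>. F (x, LSG eps sig beta (gU (snd \<omega>)) x (fst \<omega>), LWG eps sig beta (gU (snd \<omega>)) x (fst \<omega>)) \<partial>(gauss_vec sn \<Otimes>\<^sub>M Q))
      = (\<integral>\<^sup>+u. \<integral>\<^sup>+e. F (x, LSG eps sig beta (gU u) x e, LWG eps sig beta (gU u) x e) \<partial>gauss_vec sn \<partial>Q)"
      using GQ.nn_integral_snd[OF m] by simp
  qed
  also have "\<dots> = (\<integral>\<^sup>+u. \<integral>\<^sup>+x. \<integral>\<^sup>+e. F (x, LSG eps sig beta (gU u) x e, LWG eps sig beta (gU u) x e) \<partial>gauss_vec sn \<partial>lborel \<partial>Q)"
    by (rule LQ.Fubini'[symmetric]) (simp add: LSG_def LWG_def Let_def)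
  also have "\<dots> = (\<integral>\<^sup>+u. \<integral>\<^sup>+z. \<integral>\<^sup>+e. F (flip (LSG eps sig beta (gU u) z e), flip z, - LWG eps sig beta (gU u) z e) * ennreal (exp (LWG eps sig beta (gU u) z e)) \<partial>gauss_vec sn \<partial>lborel \<partial>Q)"
    by (intro nn_integral_cong SR_G[OF c sig_pos sn_def]) simp_all
  also have "\<dots> = (\<integral>\<^sup>+z. \<integral>\<^sup>+u. \<integral>\<^sup>+e. F (flip (LSG eps sig beta (gU u) z e), flip z, - LWG eps sig beta (gU u) z e) * ennreal (exp (LWG eps sig beta (gU u) z e)) \<partial>gauss_vec sn \<partial>Q \<partial>lborel)"
    by (rule LQ.Fubini') (simp add: LSG_def LWG_def Let_def)
  also have "\<dots> = (\<integral>\<^sup>+z. \<integral>\<^sup>+\<omega>. F (flip (LS z \<omega>), flip z, - LW z \<omega>) * ennreal (exp (LW z \<omega>)) \<partial>N1 \<partial>lborel)"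
    unfolding N1_def LS_def LW_def
  proof (intro nn_integral_cong)
    fix x
    have m: "(\<lambda>\<omega>. F (flip (LSG eps sig beta (gU (snd \<omega>)) x (fst \<omega>)), flip x, - LWG eps sig beta (gU (snd \<omega>)) x (fst \<omega>)) * ennreal (exp (LWG eps sig beta (gU (snd \<omega>)) x (fst \<omega>))))
      \<in> borel_measurable ((gauss_vec sn :: (real^'d) measure) \<Otimes>\<^sub>M Q)"
      by (simp add: LSG_def LWG_def Let_def)
    show "(\<integral>\<^sup>+u. \<integral>\<^sup>+e. F (flip (LSG eps sig beta (gU u) x e), flip x, - LWG eps sig beta (gU u) x e) * ennreal (exp (LWG eps sig beta (gU u) x e)) \<partial>gauss_vec sn \<partial>Q)
      = (\<integral>\<^sup>+\<omega>. F (flip (LSG eps sig beta (gU (snd \<omega>)) x (fst \<omega>)), flip x, - LWG eps sig beta (gU (snd \<omega>)) x (fst \<omega>)) * ennreal (exp (LWG eps sig beta (gU (snd \<omega>)) x (fst \<omega>))) \<partial>(gauss_vec sn \<Otimes>\<^sub>M Q))"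
      using GQ.nn_integral_snd[OF m] by simp
  qed
  finally show "(\<integral>\<^sup>+x. \<integral>\<^sup>+\<omega>. F (x, LS x \<omega>, LW x \<omega>) \<partial>N1 \<partial>lborel)
     = (\<integral>\<^sup>+z. \<integral>\<^sup>+\<omega>. F (flip (LS z \<omega>), flip z, - LW z \<omega>) * ennreal (exp (LW z \<omega>)) \<partial>N1 \<partial>lborel)" .
qed

end

definition rv :: "nat \<Rightarrow> (nat \<Rightarrow> 'a) \<Rightarrow> nat \<Rightarrow> 'a" where
  "rv n w = (\<lambda>i. w (n - 1 - i))"

context amag_loc
begin

fun LT :: "nat \<Rightarrow> 'd st \<Rightarrow> (nat \<Rightarrow> (real^'d) \<times> 'u) \<Rightarrow> 'd st" where
  "LT 0 x w = x"
| "LT (Suc n) x w = LS (LT n x w) (w n)"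

fun WT :: "nat \<Rightarrow> 'd st \<Rightarrow> (nat \<Rightarrow> (real^'d) \<times> 'u) \<Rightarrow> real" where
  "WT 0 x w = 0"
| "WT (Suc n) x w = WT n x w + LW (LT n x w) (w n)"

lemma LT_cong: "(\<And>i. i < n \<Longrightarrow> w i = w' i) \<Longrightarrow> LT n x w = LT n x w'"
  by (induction n) auto

lemma WT_cong: "(\<And>i. i < n \<Longrightarrow> w i = w' i) \<Longrightarrow> WT n x w = WT n x w'"
proof (induction n)
  case 0 then show ?case by simp
next
  case (Suc n)
  have "LT n x w = LT n x w'" by (rule LT_cong) (use Suc in auto)
  then show ?case using Suc by auto
qed

lemma LT_first: "LT (Suc n) x w = LT n (LS x (w 0)) (\<lambda>i. w (Suc i))"
  by (induction n) auto

lemma WT_first: "WT (Suc n) x w = LW x (w 0) + WT n (LS x (w 0)) (\<lambda>i. w (Suc i))"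
proof (induction n)
  case 0 then show ?case by simp
next
  case (Suc n)
  have "WT (Suc (Suc n)) x w = WT (Suc n) x w + LW (LT (Suc n) x w) (w (Suc n))" by simp
  also have "\<dots> = LW x (w 0) + WT (Suc n) (LS x (w 0)) (\<lambda>i. w (Suc i))"
    unfolding Suc LT_first by simp
  finally show ?case .
qed

lemma LT_meas_gen:
  assumes "\<And>i. i < n \<Longrightarrow> (\<lambda>t. c t i) \<in> M \<rightarrow>\<^sub>M N1" and "xf \<in> M \<rightarrow>\<^sub>M borel"
  shows "(\<lambda>t. LT n (xf t) (c t)) \<in> M \<rightarrow>\<^sub>M borel"
  using assms
proof (induction n)
  case 0 then show ?case by simp
next
  case (Suc n)
  have "(\<lambda>t. LT n (xf t) (c t)) \<in> M \<rightarrow>\<^sub>M borel" using Suc by auto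
  moreover have "(\<lambda>t. c t n) \<in> M \<rightarrow>\<^sub>M N1" using Suc by auto
  ultimately show ?case using meas2[OF LS_meas] by simp
qed

lemma WT_meas_gen:
  assumes "\<And>i. i < n \<Longrightarrow> (\<lambda>t. c t i) \<in> M \<rightarrow>\<^sub>M N1" and "xf \<in> M \<rightarrow>\<^sub>M borel"
  shows "(\<lambda>t. WT n (xf t) (c t)) \<in> M \<rightarrow>\<^sub>M borel"
  using assms
proof (induction n)
  case 0 then show ?case by simp
next
  case (Suc n)
  have "(\<lambda>t. LT n (xf t) (c t)) \<in> M \<rightarrow>\<^sub>M borel" using Suc by (intro LT_meas_gen) auto
  moreover have "(\<lambda>t. c t n) \<in> M \<rightarrow>\<^sub>M N1" using Suc by auto
  moreover have "(\<lambda>t. WT n (xf t) (c t)) \<in> M \<rightarrow>\<^sub>M borel" using Suc by auto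
  ultimately have "(\<lambda>t. LW (LT n (xf t) (c t)) (c t n)) \<in> M \<rightarrow>\<^sub>M borel"
    and "(\<lambda>t. WT n (xf t) (c t)) \<in> M \<rightarrow>\<^sub>M borel" using meas2[OF LW_meas] by auto
  then show ?case by simp
qed

abbreviation "PN n \<equiv> PiM {..<n} (\<lambda>_. N1)"

lemma comp_meas: "i < n \<Longrightarrow> (\<lambda>t. snd t i) \<in> borel \<Otimes>\<^sub>M PN n \<rightarrow>\<^sub>M N1"
  by measurable

lemma comp_meas_rv: "i < n \<Longrightarrow> (\<lambda>t. rv n (snd t) i) \<in> borel \<Otimes>\<^sub>M PN n \<rightarrow>\<^sub>M N1"
  unfolding rv_def by measurable

lemma LT_meas: "(\<lambda>(x, w). LT n x w) \<in> borel \<Otimes>\<^sub>M PN n \<rightarrow>\<^sub>M borel"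
proof -
  have "(\<lambda>t. LT n (fst t) (snd t)) \<in> borel \<Otimes>\<^sub>M PN n \<rightarrow>\<^sub>M borel"
    by (rule LT_meas_gen) (auto intro: comp_meas)
  then show ?thesis by (simp add: case_prod_beta')
qed
lemma WT_meas: "(\<lambda>(x, w). WT n x w) \<in> borel \<Otimes>\<^sub>M PN n \<rightarrow>\<^sub>M borel"
proof -
  have "(\<lambda>t. WT n (fst t) (snd t)) \<in> borel \<Otimes>\<^sub>M PN n \<rightarrow>\<^sub>M borel"
    by (rule WT_meas_gen) (auto intro: comp_meas)
  then show ?thesis by (simp add: case_prod_beta')
qed
lemma LTr_meas: "(\<lambda>(x, w). LT n x (rv n w)) \<in> borel \<Otimes>\<^sub>M PN n \<rightarrow>\<^sub>M borel"
proof -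
  have "(\<lambda>t. LT n (fst t) (rv n (snd t))) \<in> borel \<Otimes>\<^sub>M PN n \<rightarrow>\<^sub>M borel"
    by (rule LT_meas_gen) (auto intro: comp_meas_rv)
  then show ?thesis by (simp add: case_prod_beta')
qed
lemma WTr_meas: "(\<lambda>(x, w). WT n x (rv n w)) \<in> borel \<Otimes>\<^sub>M PN n \<rightarrow>\<^sub>M borel"
proof -
  have "(\<lambda>t. WT n (fst t) (rv n (snd t))) \<in> borel \<Otimes>\<^sub>M PN n \<rightarrow>\<^sub>M borel"
    by (rule WT_meas_gen) (auto intro: comp_meas_rv)
  then show ?thesis by (simp add: case_prod_beta')
qed

end

context amag_loc
begin

lemma prob_PN: "prob_space (PN n)"
  by (intro prob_space_PiM prob_N1)

lemma LT_m[measurable (raw)]: "a \<in> M \<rightarrow>\<^sub>M borel \<Longrightarrow> b \<in> M \<rightarrow>\<^sub>M PN n \<Longrightarrow> (\<lambda>t. LT n (a t) (b t)) \<in> M \<rightarrow>\<^sub>M borel"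
  by (rule meas2[OF LT_meas])
lemma WT_m[measurable (raw)]: "a \<in> M \<rightarrow>\<^sub>M borel \<Longrightarrow> b \<in> M \<rightarrow>\<^sub>M PN n \<Longrightarrow> (\<lambda>t. WT n (a t) (b t)) \<in> M \<rightarrow>\<^sub>M borel"
  by (rule meas2[OF WT_meas])
lemma LTr_m[measurable (raw)]: "a \<in> M \<rightarrow>\<^sub>M borel \<Longrightarrow> b \<in> M \<rightarrow>\<^sub>M PN n \<Longrightarrow> (\<lambda>t. LT n (a t) (rv n (b t))) \<in> M \<rightarrow>\<^sub>M borel"
  using meas2[OF LTr_meas] .
lemma WTr_m[measurable (raw)]: "a \<in> M \<rightarrow>\<^sub>M borel \<Longrightarrow> b \<in> M \<rightarrow>\<^sub>M PN n \<Longrightarrow> (\<lambda>t. WT n (a t) (rv n (b t))) \<in> M \<rightarrow>\<^sub>M borel"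
  using meas2[OF WTr_meas] .
lemma LS_m[measurable (raw)]: "a \<in> M \<rightarrow>\<^sub>M borel \<Longrightarrow> b \<in> M \<rightarrow>\<^sub>M N1 \<Longrightarrow> (\<lambda>t. LS (a t) (b t)) \<in> M \<rightarrow>\<^sub>M borel"
  by (rule meas2[OF LS_meas])
lemma LW_m[measurable (raw)]: "a \<in> M \<rightarrow>\<^sub>M borel \<Longrightarrow> b \<in> M \<rightarrow>\<^sub>M N1 \<Longrightarrow> (\<lambda>t. LW (a t) (b t)) \<in> M \<rightarrow>\<^sub>M borel"
  by (rule meas2[OF LW_meas])

lemma rv0: "rv (Suc n) (w(n := y)) 0 = y" by (simp add: rv_def)
lemma rv_LT: "LT (Suc n) z (rv (Suc n) (w(n := y))) = LT n (LS z y) (rv n w)"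
  unfolding LT_first rv0 by (rule LT_cong) (auto simp: rv_def)
lemma rv_WT: "WT (Suc n) z (rv (Suc n) (w(n := y))) = LW z y + WT n (LS z y) (rv n w)"
  unfolding WT_first rv0 by (auto simp: rv_def intro!: WT_cong)

lemma SRT: "SRp (PN n) (LT n) (WT n) (\<lambda>z w. LT n z (rv n w)) (\<lambda>z w. WT n z (rv n w))"
proof (induction n)
  case 0
  interpret P0: prob_space "PN 0" by (rule prob_PN)
  show ?case unfolding SRp_def
  proof (intro allI impI)
    fix F :: "'d st \<times> 'd st \<times> real \<Rightarrow> ennreal"
    assume F[measurable]: "F \<in> borel_measurable borel"
    have fl: "(\<integral>\<^sup>+x. F (x, x, 0) \<partial>lborel) = (\<integral>\<^sup>+x. F (flip x, flip x, 0) \<partial>lborel)"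
      by (rule nn_integral_lborel_flip) simp
    show "(\<integral>\<^sup>+x. \<integral>\<^sup>+\<omega>. F (x, LT 0 x \<omega>, WT 0 x \<omega>) \<partial>PN 0 \<partial>lborel)
      = (\<integral>\<^sup>+z. \<integral>\<^sup>+\<omega>. F (flip (LT 0 z (rv 0 \<omega>)), flip z, - WT 0 z (rv 0 \<omega>)) * ennreal (exp (WT 0 z (rv 0 \<omega>))) \<partial>PN 0 \<partial>lborel)"
    proof -
      have e: "emeasure (PiM {} (\<lambda>_::nat. N1)) (space (PiM {} (\<lambda>_::nat. N1))) = 1"
        by (rule prob_space.emeasure_space_1[OF prob_space_PiM]) (rule prob_N1)
      show ?thesis using fl by (simp add: e)
    qed
  qed
next
  case (Suc n)
  interpret PS: product_sigma_finite "\<lambda>_. N1"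
    unfolding product_sigma_finite_def using prob_N1 by (simp add: prob_space_imp_sigma_finite)
  interpret Pn: prob_space "PN n" by (rule prob_PN)
  interpret N1: prob_space N1 by (rule prob_N1)
  interpret PP: pair_sigma_finite "PN n" N1 ..
  have ins: "{..<Suc n} = insert n {..<n}" by auto
  show ?case unfolding SRp_def
  proof (intro allI impI)
    fix F :: "'d st \<times> 'd st \<times> real \<Rightarrow> ennreal"
    assume F[measurable]: "F \<in> borel_measurable borel"
    have "(\<integral>\<^sup>+x. \<integral>\<^sup>+\<omega>. F (x, LT (Suc n) x \<omega>, WT (Suc n) x \<omega>) \<partial>PN (Suc n) \<partial>lborel)
      = (\<integral>\<^sup>+x. \<integral>\<^sup>+\<omega>1. \<integral>\<^sup>+\<omega>2. F (x, LT (Suc n) x (\<omega>1(n := \<omega>2)), WT (Suc n) x (\<omega>1(n := \<omega>2))) \<partial>N1 \<partial>PN n \<partial>lborel)"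
    proof (intro nn_integral_cong)
      fix x
      have m: "(\<lambda>\<omega>. F (x, LT (Suc n) x \<omega>, WT (Suc n) x \<omega>)) \<in> borel_measurable (PN (Suc n))" by measurable
      show "(\<integral>\<^sup>+\<omega>. F (x, LT (Suc n) x \<omega>, WT (Suc n) x \<omega>) \<partial>PN (Suc n))
        = (\<integral>\<^sup>+\<omega>1. \<integral>\<^sup>+\<omega>2. F (x, LT (Suc n) x (\<omega>1(n := \<omega>2)), WT (Suc n) x (\<omega>1(n := \<omega>2))) \<partial>N1 \<partial>PN n)"
        using m unfolding ins by (intro PS.product_nn_integral_insert) auto
    qed
    also have "\<dots> = (\<integral>\<^sup>+x. \<integral>\<^sup>+\<omega>1. \<integral>\<^sup>+\<omega>2. F (x, LS (LT n x \<omega>1) \<omega>2, WT n x \<omega>1 + LW (LT n x \<omega>1) \<omega>2) \<partial>N1 \<partial>PN n \<partial>lborel)"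
    proof -
      have "LT n x (\<omega>1(n := \<omega>2)) = LT n x \<omega>1" "WT n x (\<omega>1(n := \<omega>2)) = WT n x \<omega>1" for x \<omega>1 \<omega>2
        by (auto intro!: LT_cong WT_cong)
      then show ?thesis by simp
    qed
    also have "\<dots> = (\<integral>\<^sup>+z. \<integral>\<^sup>+\<omega>2. \<integral>\<^sup>+\<omega>1. F (flip (LT n (LS z \<omega>2) (rv n \<omega>1)), flip z, - (LW z \<omega>2 + WT n (LS z \<omega>2) (rv n \<omega>1)))
         * ennreal (exp (LW z \<omega>2 + WT n (LS z \<omega>2) (rv n \<omega>1))) \<partial>PN n \<partial>N1 \<partial>lborel)"
      using SRp_comp[OF Suc.IH SR1 prob_PN prob_N1 LT_meas LTr_meas WT_meas WTr_meas LS_meas LS_meas LW_meas LW_meas F]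
      by simp
    also have "\<dots> = (\<integral>\<^sup>+z. \<integral>\<^sup>+\<omega>1. \<integral>\<^sup>+\<omega>2. F (flip (LT n (LS z \<omega>2) (rv n \<omega>1)), flip z, - (LW z \<omega>2 + WT n (LS z \<omega>2) (rv n \<omega>1)))
         * ennreal (exp (LW z \<omega>2 + WT n (LS z \<omega>2) (rv n \<omega>1))) \<partial>N1 \<partial>PN n \<partial>lborel)"
      by (intro nn_integral_cong PP.Fubini') measurable
    also have "\<dots> = (\<integral>\<^sup>+z. \<integral>\<^sup>+\<omega>1. \<integral>\<^sup>+\<omega>2. F (flip (LT (Suc n) z (rv (Suc n) (\<omega>1(n := \<omega>2)))), flip z, - WT (Suc n) z (rv (Suc n) (\<omega>1(n := \<omega>2))))
         * ennreal (exp (WT (Suc n) z (rv (Suc n) (\<omega>1(n := \<omega>2))))) \<partial>N1 \<partial>PN n \<partial>lborel)"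
      by (simp only: rv_LT rv_WT)
    also have "\<dots> = (\<integral>\<^sup>+z. \<integral>\<^sup>+\<omega>. F (flip (LT (Suc n) z (rv (Suc n) \<omega>)), flip z, - WT (Suc n) z (rv (Suc n) \<omega>)) * ennreal (exp (WT (Suc n) z (rv (Suc n) \<omega>))) \<partial>PN (Suc n) \<partial>lborel)"
    proof (intro nn_integral_cong)
      fix z
      have m: "(\<lambda>\<omega>. F (flip (LT (Suc n) z (rv (Suc n) \<omega>)), flip z, - WT (Suc n) z (rv (Suc n) \<omega>)) * ennreal (exp (WT (Suc n) z (rv (Suc n) \<omega>)))) \<in> borel_measurable (PN (Suc n))"
        by measurable
      show "(\<integral>\<^sup>+\<omega>1. \<integral>\<^sup>+\<omega>2. F (flip (LT (Suc n) z (rv (Suc n) (\<omega>1(n := \<omega>2)))), flip z, - WT (Suc n) z (rv (Suc n) (\<omega>1(n := \<omega>2))))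
         * ennreal (exp (WT (Suc n) z (rv (Suc n) (\<omega>1(n := \<omega>2))))) \<partial>N1 \<partial>PN n)
        = (\<integral>\<^sup>+\<omega>. F (flip (LT (Suc n) z (rv (Suc n) \<omega>)), flip z, - WT (Suc n) z (rv (Suc n) \<omega>)) * ennreal (exp (WT (Suc n) z (rv (Suc n) \<omega>))) \<partial>PN (Suc n))"
        using m unfolding ins by (intro PS.product_nn_integral_insert[symmetric]) auto
    qed
    finally show "(\<integral>\<^sup>+x. \<integral>\<^sup>+\<omega>. F (x, LT (Suc n) x \<omega>, WT (Suc n) x \<omega>) \<partial>PN (Suc n) \<partial>lborel)
      = (\<integral>\<^sup>+z. \<integral>\<^sup>+\<omega>. F (flip (LT (Suc n) z (rv (Suc n) \<omega>)), flip z, - WT (Suc n) z (rv (Suc n) \<omega>)) * ennreal (exp (WT (Suc n) z (rv (Suc n) \<omega>))) \<partial>PN (Suc n) \<partial>lborel)" .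
  qed
qed

end

context amag_loc
begin

lemma rev_inv:
  fixes \<Phi> :: "'d st \<times> real \<Rightarrow> ennreal"
  assumes [measurable]: "\<Phi> \<in> borel_measurable borel"
  shows "(\<integral>\<^sup>+\<omega>. \<Phi> (LT n z (rv n \<omega>), WT n z (rv n \<omega>)) \<partial>PN n) = (\<integral>\<^sup>+\<omega>. \<Phi> (LT n z \<omega>, WT n z \<omega>) \<partial>PN n)"
proof -
  let ?f = "\<lambda>i::nat. n - 1 - i"
  have inj: "inj_on ?f {..<n}" by (auto intro!: inj_onI)
  have fI: "?f \<in> {..<n} \<rightarrow> {..<n}" by auto
  have D: "distr (PN n) (PN n) (\<lambda>\<omega>. \<lambda>i\<in>{..<n}. \<omega> (?f i)) = PN n"
    using distr_PiM_reindex[OF prob_N1 inj fI] by simp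
  have mr: "(\<lambda>\<omega>. \<lambda>i\<in>{..<n}. \<omega> (?f i)) \<in> PN n \<rightarrow>\<^sub>M PN n"
    by (rule measurable_restrict) (auto intro!: measurable_component_singleton)
  have "(\<integral>\<^sup>+\<omega>. \<Phi> (LT n z \<omega>, WT n z \<omega>) \<partial>PN n) = (\<integral>\<^sup>+\<omega>. \<Phi> (LT n z \<omega>, WT n z \<omega>) \<partial>distr (PN n) (PN n) (\<lambda>\<omega>. \<lambda>i\<in>{..<n}. \<omega> (?f i)))"
    by (simp only: D)
  also have "\<dots> = (\<integral>\<^sup>+\<omega>. \<Phi> (LT n z (\<lambda>i\<in>{..<n}. \<omega> (?f i)), WT n z (\<lambda>i\<in>{..<n}. \<omega> (?f i))) \<partial>PN n)"
    by (subst nn_integral_distr[OF mr]) measurable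
  also have "\<dots> = (\<integral>\<^sup>+\<omega>. \<Phi> (LT n z (rv n \<omega>), WT n z (rv n \<omega>)) \<partial>PN n)"
  proof -
    have "LT n z (\<lambda>i\<in>{..<n}. \<omega> (?f i)) = LT n z (rv n \<omega>)" "WT n z (\<lambda>i\<in>{..<n}. \<omega> (?f i)) = WT n z (rv n \<omega>)" for \<omega>
      by (auto intro!: LT_cong WT_cong simp: rv_def)
    then show ?thesis by simp
  qed
  finally show ?thesis ..
qed

lemma amag_pre_LT:
  "amag_pre eps sig beta gU (fst x) (snd x) (\<lambda>t. fst (w t)) (\<lambda>t. snd (w t)) t
   = (fst (LT t x w) + hh eps sig *\<^sub>R snd (LT t x w), snd (LT t x w), WT t x w - kin sig (snd (LT t x w)) + kin sig (snd x))"
proof (induction t)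
  case 0 then show ?case by (simp add: hh_def)
next
  case (Suc t)
  obtain q p where qp: "LT t x w = (q, p)" by (cases "LT t x w")
  define g where "g = gU (snd (w t)) (q + hh eps sig *\<^sub>R p)"
  define p' where "p' = mom_upd eps beta g (fst (w t)) p"
  have LTs: "LT (Suc t) x w = (q + hh eps sig *\<^sub>R p + hh eps sig *\<^sub>R p', p')"
    by (simp add: qp LS_def LSG_def Let_def p'_def g_def)
  have WTs: "WT (Suc t) x w = WT t x w + (kin sig p' - kin sig p + rho_upd eps sig g p p' 0)"
    by (simp add: qp LW_def LWG_def Let_def p'_def g_def)
  have pre: "amag_pre eps sig beta gU (fst x) (snd x) (\<lambda>t. fst (w t)) (\<lambda>t. snd (w t)) (Suc t)
     = (q + hh eps sig *\<^sub>R p + (eps / sig\<^sup>2) *\<^sub>R p', p', rho_upd eps sig g p p' (WT t x w - kin sig p + kin sig (snd x)))"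
    by (simp add: Suc qp p'_def g_def Let_def)
  have h2: "q + hh eps sig *\<^sub>R p + (eps / sig\<^sup>2) *\<^sub>R p' = q + hh eps sig *\<^sub>R p + hh eps sig *\<^sub>R p' + hh eps sig *\<^sub>R p'"
  proof -
    have "(eps / sig\<^sup>2) *\<^sub>R p' = hh eps sig *\<^sub>R p' + hh eps sig *\<^sub>R p'"
      by (simp add: hh_def scaleR_add_left[symmetric])
    then show ?thesis by (simp add: add.assoc)
  qed
  have r: "rho_upd eps sig g p p' (WT t x w - kin sig p + kin sig (snd x))
      = WT t x w + (kin sig p' - kin sig p + rho_upd eps sig g p p' 0) - kin sig p' + kin sig (snd x)"
    by (simp add: rho_upd_def)
  show ?case unfolding pre LTs WTs fst_conv snd_conv h2 r ..
qed

lemma amag_prop_LT: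
  assumes "T \<ge> 1"
  shows "amag_prop eps sig beta gU (fst x) (snd x) (\<lambda>t. fst (w t)) (\<lambda>t. snd (w t)) T
   = (fst (LT T x w), snd (LT T x w), WT T x w - kin sig (snd (LT T x w)) + kin sig (snd x))"
proof -
  obtain m where T: "T = Suc m" using assms by (cases T) auto
  obtain q p where qp: "LT m x w = (q, p)" by (cases "LT m x w")
  define g where "g = gU (snd (w m)) (q + hh eps sig *\<^sub>R p)"
  define p' where "p' = mom_upd eps beta g (fst (w m)) p"
  have LTs: "LT (Suc m) x w = (q + hh eps sig *\<^sub>R p + hh eps sig *\<^sub>R p', p')"
    by (simp add: qp LS_def LSG_def Let_def p'_def g_def)
  have WTs: "WT (Suc m) x w = WT m x w + (kin sig p' - kin sig p + rho_upd eps sig g p p' 0)"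
    by (simp add: qp LW_def LWG_def Let_def p'_def g_def)
  have pr: "amag_prop eps sig beta gU (fst x) (snd x) (\<lambda>t. fst (w t)) (\<lambda>t. snd (w t)) (Suc m)
     = (q + hh eps sig *\<^sub>R p + (eps / (2 * sig\<^sup>2)) *\<^sub>R p', p', rho_upd eps sig g p p' (WT m x w - kin sig p + kin sig (snd x)))"
    by (simp add: amag_prop_def amag_pre_LT qp p'_def g_def Let_def)
  have r: "rho_upd eps sig g p p' (WT m x w - kin sig p + kin sig (snd x))
      = WT m x w + (kin sig p' - kin sig p + rho_upd eps sig g p p' 0) - kin sig p' + kin sig (snd x)"
    by (simp add: rho_upd_def)
  show ?thesis unfolding T pr LTs WTs fst_conv snd_conv r by (simp add: hh_def)
qed

end

lemma unif_integral:
  fixes m :: real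
  assumes m: "0 \<le> m" "m \<le> 1" and B: "B \<in> sets borel"
  shows "(\<integral>\<^sup>+v. indicator B (if c \<and> v < m then y else fx) \<partial>uniform_measure lborel {0..1::real})
    = indicator B y * ennreal (if c then m else 0) + indicator B fx * ennreal (1 - (if c then m else 0))"
proof (cases c)
  case False
  interpret UP: prob_space "uniform_measure lborel {0..1::real}"
    by (rule prob_space_uniform_measure) auto
  show ?thesis using False by (simp add: UP.emeasure_space_1)
next
  case True
  have e1: "emeasure (uniform_measure lborel {0..1::real}) {..<m} = ennreal m"
  proof -
    have "{0..1::real} \<inter> {..<m} = {0..<m}" using m by auto
    then show ?thesis using m by (simp add: divide_ennreal_def)
  qed
  have e2: "emeasure (uniform_measure lborel {0..1::real}) {m..} = ennreal (1 - m)"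
  proof -
    have "{0..1::real} \<inter> {m..} = {m..1}" using m by auto
    then show ?thesis using m by (simp add: divide_ennreal_def)
  qed
  have "(\<lambda>v. indicator B (if c \<and> v < m then y else fx) :: ennreal)
     = (\<lambda>v. indicator B y * indicator {..<m} v + indicator B fx * indicator {m..} v)"
    using True by (auto simp: fun_eq_iff split: split_indicator)
  then have "(\<integral>\<^sup>+v. indicator B (if c \<and> v < m then y else fx) \<partial>uniform_measure lborel {0..1::real})
      = (\<integral>\<^sup>+v. indicator B y * indicator {..<m} v + indicator B fx * indicator {m..} v \<partial>uniform_measure lborel {0..1::real})"
    by simp
  also have "\<dots> = indicator B y * ennreal m + indicator B fx * ennreal (1 - m)"
    by (subst nn_integral_add) (auto simp: nn_integral_cmult_indicator e1 e2)
  finally show ?thesis using True by simp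
qed

locale amag_full = amag_loc eps sig beta Q gU
  for eps sig beta :: real and Q :: "'u measure" and gU :: "'u \<Rightarrow> real^'d::finite \<Rightarrow> real^'d" +
  fixes Theta :: "(real^'d) set" and U :: "real^'d \<Rightarrow> real" and T :: nat
  assumes Theta_meas: "Theta \<in> sets borel" and U_meas[measurable]: "U \<in> borel_measurable borel"
    and T_ge: "T \<ge> 1"
begin

definition acc :: "'d st \<Rightarrow> (nat \<Rightarrow> (real^'d) \<times> 'u) \<Rightarrow> real" where
  "acc x w = indicator Theta (fst (LT T x w)) *
     min 1 (exp (U (fst x) - U (fst (LT T x w)) + (WT T x w - kin sig (snd (LT T x w)) + kin sig (snd x))))"

lemma Theta_m[measurable]: "Theta \<in> sets borel" by (rule Theta_meas)

lemma acc_range: "0 \<le> acc x w" "acc x w \<le> 1"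
  unfolding acc_def by (auto simp: indicator_def)

lemma acc_meas[measurable]: "(\<lambda>(x, w). acc x w) \<in> borel \<Otimes>\<^sub>M PN T \<rightarrow>\<^sub>M borel"
  unfolding acc_def by measurable

lemma step_eq: "amag_step Theta U eps sig beta gU T x (w, v)
  = (if fst (LT T x w) \<in> Theta \<and> v < min 1 (exp (U (fst x) - U (fst (LT T x w)) + (WT T x w - kin sig (snd (LT T x w)) + kin sig (snd x))))
     then LT T x w else flip x)"
proof -
  obtain th r where x: "x = (th, r)" by (cases x)
  show ?thesis
    using amag_prop_LT[OF T_ge, of x w] unfolding x
    by (simp add: amag_step_def flip_def)
qed

lemma noise_eq: "(amag_noise eps sig beta Q T :: ((nat \<Rightarrow> (real^'d) \<times> 'u) \<times> real) measure) = PN T \<Otimes>\<^sub>M uniform_measure lborel {0..1}"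
  unfolding amag_noise_def N1_def sn_def ..

lemma step_meas: "(\<lambda>\<omega>. amag_step Theta U eps sig beta gU T x \<omega>) \<in> PN T \<Otimes>\<^sub>M uniform_measure lborel {0..1} \<rightarrow>\<^sub>M borel"
proof -
  have "(\<lambda>\<omega>. (if fst (LT T x (fst \<omega>)) \<in> Theta \<and> snd \<omega> < min 1 (exp (U (fst x) - U (fst (LT T x (fst \<omega>))) + (WT T x (fst \<omega>) - kin sig (snd (LT T x (fst \<omega>))) + kin sig (snd x))))
     then LT T x (fst \<omega>) else flip x)) \<in> PN T \<Otimes>\<^sub>M uniform_measure lborel {0..1} \<rightarrow>\<^sub>M borel"
    by measurable
  moreover have "(\<lambda>\<omega>. amag_step Theta U eps sig beta gU T x \<omega>) = (\<lambda>\<omega>. (if fst (LT T x (fst \<omega>)) \<in> Theta \<and> snd \<omega> < min 1 (exp (U (fst x) - U (fst (LT T x (fst \<omega>))) + (WT T x (fst \<omega>) - kin sig (snd (LT T x (fst \<omega>))) + kin sig (snd x))))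
     then LT T x (fst \<omega>) else flip x))"
  proof
    fix \<omega> :: "(nat \<Rightarrow> (real^'d) \<times> 'u) \<times> real"
    show "amag_step Theta U eps sig beta gU T x \<omega> = (if fst (LT T x (fst \<omega>)) \<in> Theta \<and> snd \<omega> < min 1 (exp (U (fst x) - U (fst (LT T x (fst \<omega>))) + (WT T x (fst \<omega>) - kin sig (snd (LT T x (fst \<omega>))) + kin sig (snd x))))
     then LT T x (fst \<omega>) else flip x)"
      by (cases \<omega>) (simp only: step_eq fst_conv snd_conv)
  qed
  ultimately show ?thesis by simp
qed

lemma kernel_eq:
  assumes B: "B \<in> sets borel"
  shows "emeasure (amag_kernel Theta U eps sig beta gU Q T x) B
    = (\<integral>\<^sup>+w. indicator B (LT T x w) * ennreal (acc x w) + indicator B (flip x) * ennreal (1 - acc x w) \<partial>PN T)"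
proof -
  interpret UP: prob_space "uniform_measure lborel {0..1::real}"
    by (rule prob_space_uniform_measure) auto
  have "emeasure (amag_kernel Theta U eps sig beta gU Q T x) B
      = (\<integral>\<^sup>+\<omega>. indicator B \<omega> \<partial>amag_kernel Theta U eps sig beta gU Q T x)"
    using B by (simp add: amag_kernel_def)
  also have "\<dots> = (\<integral>\<^sup>+\<omega>. indicator B (amag_step Theta U eps sig beta gU T x \<omega>) \<partial>(PN T \<Otimes>\<^sub>M uniform_measure lborel {0..1}))"
    unfolding amag_kernel_def noise_eq using B step_meas
    by (subst nn_integral_distr) auto
  also have "\<dots> = (\<integral>\<^sup>+w. \<integral>\<^sup>+v. indicator B (amag_step Theta U eps sig beta gU T x (w, v)) \<partial>uniform_measure lborel {0..1} \<partial>PN T)"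
    using B step_meas by (subst UP.nn_integral_fst[symmetric]) auto
  also have "\<dots> = (\<integral>\<^sup>+w. indicator B (LT T x w) * ennreal (acc x w) + indicator B (flip x) * ennreal (1 - acc x w) \<partial>PN T)"
  proof (intro nn_integral_cong)
    fix w
    let ?m = "min 1 (exp (U (fst x) - U (fst (LT T x w)) + (WT T x w - kin sig (snd (LT T x w)) + kin sig (snd x))))"
    have a: "acc x w = (if fst (LT T x w) \<in> Theta then ?m else 0)"
      unfolding acc_def by simp
    show "(\<integral>\<^sup>+v. indicator B (amag_step Theta U eps sig beta gU T x (w, v)) \<partial>uniform_measure lborel {0..1})
      = indicator B (LT T x w) * ennreal (acc x w) + indicator B (flip x) * ennreal (1 - acc x w)"
      unfolding step_eq a by (rule unif_integral[OF _ _ B]) auto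
  qed
  finally show ?thesis .
qed

end

lemma exp_min: "exp a * min 1 (exp (b - a)) = min (exp a) (exp (b::real))"
proof (cases "b \<le> a")
  case True
  then have "exp (b - a) \<le> 1" by simp
  moreover have "exp a * exp (b - a) = exp b" by (simp add: exp_diff)
  ultimately show ?thesis using True by (simp add: min_def)
next
  case False
  then have "exp (b - a) \<ge> 1" by simp
  then show ?thesis using False by (simp add: min_def)
qed

lemma flip_image: "flip ` A = flip -` A"
  by (auto simp: flip_def image_iff) (metis flip_def flip_flip fst_conv snd_conv)

lemma flip_image_sets[measurable]: "A \<in> sets borel \<Longrightarrow> flip ` A \<in> sets borel"
  unfolding flip_image by (rule measurable_sets_borel[OF flip_meas])

lemma ind_flip: "indicator (flip ` A) x = (indicator A (flip x) :: 'a::zero_neq_one)"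
  by (simp add: flip_image indicator_def)

context amag_full
begin

definition pu :: "'d st \<Rightarrow> real" where
  "pu x = indicator Theta (fst x) * exp (- U (fst x) - kin sig (snd x))"

lemma pu_nonneg: "0 \<le> pu x" by (simp add: pu_def)
lemma pu_meas[measurable]: "pu \<in> borel_measurable borel" unfolding pu_def by measurable
lemma pu_flip: "pu (flip x) = pu x" by (simp add: pu_def flip_def kin_def)

lemma core_identity:
  fixes A B :: "'d st set"
  shows "indicator A (flip y) * (pu (flip y) * cst) * indicator B (flip z) * indicator Theta (fst (flip z)) *
          min 1 (exp (U (fst (flip y)) - U (fst (flip z)) + (- W - kin sig (snd (flip z)) + kin sig (snd (flip y))))) * exp W
       = indicator B (flip z) * (pu z * cst) * indicator A (flip y) *
          (indicator Theta (fst y) * min 1 (exp (U (fst z) - U (fst y) + (W - kin sig (snd y) + kin sig (snd z)))))"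
proof -
  have k: "kin sig (- v) = kin sig v" for v :: "real^'d" by (simp add: kin_def)
  let ?a = "- U (fst y) - kin sig (snd y) + W" and ?b = "- U (fst z) - kin sig (snd z)"
  have e1: "exp (- U (fst y) - kin sig (snd y)) * min 1 (exp (U (fst y) - U (fst z) + (- W - kin sig (snd z) + kin sig (snd y)))) * exp W
      = min (exp ?a) (exp ?b)"
  proof -
    have "exp (- U (fst y) - kin sig (snd y)) * min 1 (exp (U (fst y) - U (fst z) + (- W - kin sig (snd z) + kin sig (snd y)))) * exp W
       = exp ?a * min 1 (exp (?b - ?a))"
    proof -
      have arg: "U (fst y) - U (fst z) + (- W - kin sig (snd z) + kin sig (snd y)) = ?b - ?a" by simp
      have ea: "exp (- U (fst y) - kin sig (snd y)) * exp W = exp ?a" by (simp add: exp_add[symmetric])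
      show ?thesis unfolding arg by (simp only: ea[symmetric] mult_ac)
    qed
    then show ?thesis by (simp add: exp_min)
  qed
  have e2: "exp (- U (fst z) - kin sig (snd z)) * min 1 (exp (U (fst z) - U (fst y) + (W - kin sig (snd y) + kin sig (snd z))))
      = min (exp ?b) (exp ?a)"
  proof -
    have "exp (- U (fst z) - kin sig (snd z)) * min 1 (exp (U (fst z) - U (fst y) + (W - kin sig (snd y) + kin sig (snd z))))
       = exp ?b * min 1 (exp (?a - ?b))"
    proof -
      have arg: "U (fst z) - U (fst y) + (W - kin sig (snd y) + kin sig (snd z)) = ?a - ?b" by simp
      show ?thesis unfolding arg ..
    qed
    then show ?thesis by (simp add: exp_min)
  qed
  have "indicator A (flip y) * (pu (flip y) * cst) * indicator B (flip z) * indicator Theta (fst (flip z)) *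
          min 1 (exp (U (fst (flip y)) - U (fst (flip z)) + (- W - kin sig (snd (flip z)) + kin sig (snd (flip y))))) * exp W
      = indicator A (flip y) * cst * indicator B (flip z) * indicator Theta (fst z) * indicator Theta (fst y) *
        (exp (- U (fst y) - kin sig (snd y)) * min 1 (exp (U (fst y) - U (fst z) + (- W - kin sig (snd z) + kin sig (snd y)))) * exp W)"
    by (simp add: pu_def flip_def k mult_ac)
  also have "\<dots> = indicator A (flip y) * cst * indicator B (flip z) * indicator Theta (fst z) * indicator Theta (fst y) * min (exp ?a) (exp ?b)"
    unfolding e1 ..
  also have "\<dots> = indicator A (flip y) * cst * indicator B (flip z) * indicator Theta (fst z) * indicator Theta (fst y) *
       (exp (- U (fst z) - kin sig (snd z)) * min 1 (exp (U (fst z) - U (fst y) + (W - kin sig (snd y) + kin sig (snd z)))))"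
    unfolding e2 by (simp add: min.commute)
  also have "\<dots> = indicator B (flip z) * (pu z * cst) * indicator A (flip y) *
          (indicator Theta (fst y) * min 1 (exp (U (fst z) - U (fst y) + (W - kin sig (snd y) + kin sig (snd z)))))"
    by (simp add: pu_def mult_ac)
  finally show ?thesis .
qed

end

context amag_full
begin

abbreviation "Kx x B \<equiv> emeasure (amag_kernel Theta U eps sig beta gU Q T x) B"

lemma kernel_real:
  assumes B: "B \<in> sets borel"
  shows "Kx x B = (\<integral>\<^sup>+w. ennreal (indicator B (LT T x w) * acc x w + indicator B (flip x) * (1 - acc x w)) \<partial>PN T)"
  unfolding kernel_eq[OF B]
  by (intro nn_integral_cong) (auto simp: indicator_def acc_range ennreal_plus[symmetric] simp del: ennreal_plus)

definition P1 :: "real \<Rightarrow> 'd st set \<Rightarrow> 'd st set \<Rightarrow> 'd st \<Rightarrow> (nat \<Rightarrow> (real^'d) \<times> 'u) \<Rightarrow> real" where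
  "P1 cst A B x w = indicator A x * (pu x * cst) * indicator B (LT T x w) * acc x w"
definition P2 :: "real \<Rightarrow> 'd st set \<Rightarrow> 'd st set \<Rightarrow> 'd st \<Rightarrow> (nat \<Rightarrow> (real^'d) \<times> 'u) \<Rightarrow> real" where
  "P2 cst A B x w = indicator A x * (pu x * cst) * indicator B (flip x) * (1 - acc x w)"

lemma split_int:
  assumes c: "cst \<ge> 0" and A[measurable]: "A \<in> sets borel" and B[measurable]: "B \<in> sets borel"
  shows "(\<integral>\<^sup>+x. ennreal (indicator A x * (pu x * cst)) * Kx x B \<partial>lborel)
    = (\<integral>\<^sup>+x. \<integral>\<^sup>+w. ennreal (P1 cst A B x w) \<partial>PN T \<partial>lborel) + (\<integral>\<^sup>+x. \<integral>\<^sup>+w. ennreal (P2 cst A B x w) \<partial>PN T \<partial>lborel)"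
proof -
  interpret PT: prob_space "PN T" by (rule prob_PN)
  have nn: "0 \<le> indicator A x * (pu x * cst)" for x using c pu_nonneg by (simp add: indicator_def)
  have "(\<integral>\<^sup>+x. ennreal (indicator A x * (pu x * cst)) * Kx x B \<partial>lborel)
     = (\<integral>\<^sup>+x. \<integral>\<^sup>+w. ennreal (P1 cst A B x w) + ennreal (P2 cst A B x w) \<partial>PN T \<partial>lborel)"
  proof (intro nn_integral_cong)
    fix x
    have "ennreal (indicator A x * (pu x * cst)) * Kx x B
       = (\<integral>\<^sup>+w. ennreal (indicator A x * (pu x * cst)) * ennreal (indicator B (LT T x w) * acc x w + indicator B (flip x) * (1 - acc x w)) \<partial>PN T)"
      unfolding kernel_real[OF B] by (subst nn_integral_cmult) auto
    also have "\<dots> = (\<integral>\<^sup>+w. ennreal (P1 cst A B x w) + ennreal (P2 cst A B x w) \<partial>PN T)"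
    proof (intro nn_integral_cong)
      fix w
      have a1: "0 \<le> P1 cst A B x w" "0 \<le> P2 cst A B x w"
        unfolding P1_def P2_def using nn[of x] acc_range[of x w] by auto
      have "ennreal (indicator A x * (pu x * cst)) * ennreal (indicator B (LT T x w) * acc x w + indicator B (flip x) * (1 - acc x w))
         = ennreal (P1 cst A B x w + P2 cst A B x w)"
      proof -
        have nn2: "0 \<le> indicator B (LT T x w) * acc x w + indicator B (flip x) * (1 - acc x w)"
          using acc_range[of x w] by (auto simp: indicator_def)
        show ?thesis using nn[of x] nn2 by (subst ennreal_mult[symmetric]) (auto simp: P1_def P2_def algebra_simps)
      qed
      also have "\<dots> = ennreal (P1 cst A B x w) + ennreal (P2 cst A B x w)"
        using a1 by simp
      finally show "ennreal (indicator A x * (pu x * cst)) * ennreal (indicator B (LT T x w) * acc x w + indicator B (flip x) * (1 - acc x w))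
         = ennreal (P1 cst A B x w) + ennreal (P2 cst A B x w)" .
    qed
    finally show "ennreal (indicator A x * (pu x * cst)) * Kx x B = (\<integral>\<^sup>+w. ennreal (P1 cst A B x w) + ennreal (P2 cst A B x w) \<partial>PN T)" .
  qed
  also have "\<dots> = (\<integral>\<^sup>+x. (\<integral>\<^sup>+w. ennreal (P1 cst A B x w) \<partial>PN T) + (\<integral>\<^sup>+w. ennreal (P2 cst A B x w) \<partial>PN T) \<partial>lborel)"
    by (intro nn_integral_cong nn_integral_add) (auto simp: P1_def P2_def acc_def)
  also have "\<dots> = (\<integral>\<^sup>+x. \<integral>\<^sup>+w. ennreal (P1 cst A B x w) \<partial>PN T \<partial>lborel) + (\<integral>\<^sup>+x. \<integral>\<^sup>+w. ennreal (P2 cst A B x w) \<partial>PN T \<partial>lborel)"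
    by (rule nn_integral_add) (auto simp: P1_def P2_def acc_def)
  finally show ?thesis .
qed

end

context amag_full
begin

lemma P2_flip: "P2 cst A B x w = P2 cst (flip ` B) (flip ` A) x w"
  unfolding P2_def ind_flip by (simp add: mult_ac)

lemma P1_sym:
  assumes A[measurable]: "A \<in> sets borel" and B[measurable]: "B \<in> sets borel"
  shows "(\<integral>\<^sup>+x. \<integral>\<^sup>+w. ennreal (P1 cst A B x w) \<partial>PN T \<partial>lborel)
       = (\<integral>\<^sup>+x. \<integral>\<^sup>+w. ennreal (P1 cst (flip ` B) (flip ` A) x w) \<partial>PN T \<partial>lborel)"
proof -
  define F where "F = (\<lambda>t :: 'd st \<times> 'd st \<times> real. ennreal (indicator A (fst t) * (pu (fst t) * cst) * indicator B (fst (snd t)) *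
     (indicator Theta (fst (fst (snd t))) * min 1 (exp (U (fst (fst t)) - U (fst (fst (snd t))) + (snd (snd t) - kin sig (snd (fst (snd t))) + kin sig (snd (fst t))))))))"
  have Fm[measurable]: "F \<in> borel_measurable borel" unfolding F_def by measurable
  have "(\<integral>\<^sup>+x. \<integral>\<^sup>+w. ennreal (P1 cst A B x w) \<partial>PN T \<partial>lborel) = (\<integral>\<^sup>+x. \<integral>\<^sup>+w. F (x, LT T x w, WT T x w) \<partial>PN T \<partial>lborel)"
    by (simp add: F_def P1_def acc_def)
  also have "\<dots> = (\<integral>\<^sup>+z. \<integral>\<^sup>+w. F (flip (LT T z (rv T w)), flip z, - WT T z (rv T w)) * ennreal (exp (WT T z (rv T w))) \<partial>PN T \<partial>lborel)"
    using SRT[of T, unfolded SRp_def, rule_format, OF Fm] by simp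
  also have "\<dots> = (\<integral>\<^sup>+z. \<integral>\<^sup>+w. F (flip (LT T z w), flip z, - WT T z w) * ennreal (exp (WT T z w)) \<partial>PN T \<partial>lborel)"
  proof (rule nn_integral_cong)
    fix z
    have m: "(\<lambda>t :: 'd st \<times> real. F (flip (fst t), flip z, - snd t) * ennreal (exp (snd t))) \<in> borel_measurable borel"
      by measurable
    show "(\<integral>\<^sup>+w. F (flip (LT T z (rv T w)), flip z, - WT T z (rv T w)) * ennreal (exp (WT T z (rv T w))) \<partial>PN T)
      = (\<integral>\<^sup>+w. F (flip (LT T z w), flip z, - WT T z w) * ennreal (exp (WT T z w)) \<partial>PN T)"
      using rev_inv[OF m, of T z] by simp
  qed
  also have "\<dots> = (\<integral>\<^sup>+x. \<integral>\<^sup>+w. ennreal (P1 cst (flip ` B) (flip ` A) x w) \<partial>PN T \<partial>lborel)"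
  proof (intro nn_integral_cong)
    fix z w
    have "F (flip (LT T z w), flip z, - WT T z w) * ennreal (exp (WT T z w))
      = ennreal (indicator A (flip (LT T z w)) * (pu (flip (LT T z w)) * cst) * indicator B (flip z) *
          (indicator Theta (fst (flip z)) * min 1 (exp (U (fst (flip (LT T z w))) - U (fst (flip z)) + (- WT T z w - kin sig (snd (flip z)) + kin sig (snd (flip (LT T z w))))))) * exp (WT T z w))"
      unfolding F_def by (subst ennreal_mult'') auto
    also have "\<dots> = ennreal (P1 cst (flip ` B) (flip ` A) z w)"
    proof -
      have p: "P1 cst (flip ` B) (flip ` A) z w = indicator B (flip z) * (pu z * cst) * indicator A (flip (LT T z w)) *
          (indicator Theta (fst (LT T z w)) * min 1 (exp (U (fst z) - U (fst (LT T z w)) + (WT T z w - kin sig (snd (LT T z w)) + kin sig (snd z)))))"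
        unfolding P1_def acc_def ind_flip ..
      show ?thesis unfolding p core_identity[of A "LT T z w" cst B z "WT T z w", symmetric]
        by (simp only: mult.assoc)
    qed
    finally show "F (flip (LT T z w), flip z, - WT T z w) * ennreal (exp (WT T z w)) = ennreal (P1 cst (flip ` B) (flip ` A) z w)" .
  qed
  finally show ?thesis .
qed

theorem master:
  assumes c: "cst \<ge> 0" and A[measurable]: "A \<in> sets borel" and B[measurable]: "B \<in> sets borel"
  shows "(\<integral>\<^sup>+x. ennreal (indicator A x * (pu x * cst)) * Kx x B \<partial>lborel)
    = (\<integral>\<^sup>+x. ennreal (indicator (flip ` B) x * (pu x * cst)) * Kx x (flip ` A) \<partial>lborel)"
  unfolding split_int[OF c A B] split_int[OF c flip_image_sets[OF B] flip_image_sets[OF A]]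
  unfolding P1_sym[OF A B] P2_flip[of cst A B] ..

end

lemma ennreal_indicator_mult: "ennreal (indicator A x * y) = indicator A x * ennreal y"
  by (simp add: indicator_def)

locale amag_thm = amag_full eps sig beta Q gU Theta U T
  for eps sig beta :: real and Q :: "'u measure" and gU :: "'u \<Rightarrow> real^'d::finite \<Rightarrow> real^'d"
    and Theta U T +
  assumes Z_int: "integrable lborel (\<lambda>t. indicator Theta t * exp (- U t))"
    and Z_pos: "(\<integral>t. indicator Theta t * exp (- U t) \<partial>lborel) > 0"
begin

definition "Zt = (\<integral>t. indicator Theta t * exp (- U t) \<partial>lborel)"
definition "Cg = (1 / sqrt (2 * pi * sig\<^sup>2)) ^ CARD('d)"
definition "Zs = (\<integral>(y::'d st). indicator Theta (fst y) * exp (- U (fst y) - (norm (snd y))\<^sup>2 / (2 * sig\<^sup>2)) \<partial>lborel)"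

lemma Cg_pos: "Cg > 0" unfolding Cg_def using sig_pos by simp

lemma Zt_nn: "(\<integral>\<^sup>+t. ennreal (indicator Theta t * exp (- U t)) \<partial>lborel) = ennreal Zt"
  unfolding Zt_def by (rule nn_integral_eq_integral[OF Z_int]) auto

lemma gdens_sig: "exp (- (norm r)\<^sup>2 / (2 * sig\<^sup>2)) = gdens sig r / Cg" for r :: "real^'d"
  using Cg_pos sig_pos by (simp add: gdens_eq Cg_def)

lemma Zs_eq: "Zs = Zt / Cg"
proof -
  have "Zs = enn2real (\<integral>\<^sup>+y. ennreal (indicator Theta (fst y) * exp (- U (fst y) - (norm (snd y))\<^sup>2 / (2 * sig\<^sup>2))) \<partial>(lborel :: 'd st measure))"
    unfolding Zs_def by (rule integral_eq_nn_integral) auto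
  also have "(\<integral>\<^sup>+y. ennreal (indicator Theta (fst y) * exp (- U (fst y) - (norm (snd y))\<^sup>2 / (2 * sig\<^sup>2))) \<partial>(lborel :: 'd st measure))
     = (\<integral>\<^sup>+t. \<integral>\<^sup>+(r::real^'d). ennreal (indicator Theta t * exp (- U t) / Cg) * ennreal (gdens sig r) \<partial>lborel \<partial>lborel)"
  proof -
    have "(\<integral>\<^sup>+y. ennreal (indicator Theta (fst y) * exp (- U (fst y) - (norm (snd y))\<^sup>2 / (2 * sig\<^sup>2))) \<partial>(lborel :: 'd st measure))
      = (\<integral>\<^sup>+t. \<integral>\<^sup>+(r::real^'d). ennreal (indicator Theta t * exp (- U t - (norm r)\<^sup>2 / (2 * sig\<^sup>2))) \<partial>lborel \<partial>lborel)"
      by (subst nn_integral_lborel_pair) auto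
    also have "\<dots> = (\<integral>\<^sup>+t. \<integral>\<^sup>+(r::real^'d). ennreal (indicator Theta t * exp (- U t) / Cg) * ennreal (gdens sig r) \<partial>lborel \<partial>lborel)"
    proof (intro nn_integral_cong)
      fix t r :: "real^'d"
      have "indicator Theta t * exp (- U t - (norm r)\<^sup>2 / (2 * sig\<^sup>2)) = indicator Theta t * exp (- U t) / Cg * gdens sig r"
      proof -
        have "- U t - (norm r)\<^sup>2 / (2 * sig\<^sup>2) = - U t + (- (norm r)\<^sup>2 / (2 * sig\<^sup>2))" by simp
        then have "exp (- U t - (norm r)\<^sup>2 / (2 * sig\<^sup>2)) = exp (- U t) * (gdens sig r / Cg)"
          by (simp only: exp_add gdens_sig)
        then show ?thesis by simp
      qed
      then show "ennreal (indicator Theta t * exp (- U t - (norm r)\<^sup>2 / (2 * sig\<^sup>2))) = ennreal (indicator Theta t * exp (- U t) / Cg) * ennreal (gdens sig r)"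
        using Cg_pos by (subst ennreal_mult[symmetric]) (auto simp: gdens_nonneg)
    qed
    finally show ?thesis .
  qed
  also have "\<dots> = (\<integral>\<^sup>+t. ennreal (indicator Theta t * exp (- U t) / Cg) \<partial>lborel)"
    by (intro nn_integral_cong) (simp add: nn_integral_cmult nn_integral_gdens[OF sig_pos])
  also have "\<dots> = (\<integral>\<^sup>+t. ennreal (1 / Cg) * ennreal (indicator Theta t * exp (- U t)) \<partial>lborel)"
    using Cg_pos by (intro nn_integral_cong) (simp add: ennreal_mult''[symmetric])
  also have "\<dots> = ennreal (1 / Cg) * ennreal Zt"
    by (simp add: nn_integral_cmult Zt_nn)
  also have "\<dots> = ennreal (Zt / Cg)"
    using Cg_pos Z_pos by (simp add: ennreal_mult''[symmetric] Zt_def)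
  finally show ?thesis using Cg_pos Z_pos by (simp add: Zt_def)
qed

lemma Zs_pos: "Zs > 0" using Zs_eq Cg_pos Z_pos by (simp add: Zt_def)

lemma pi_state_pu: "pi_state Theta U sig x = pu x * (1 / Zs)"
  unfolding pi_state_def pu_def kin_def Zs_def by simp

lemma pi_state_split: "pi_state Theta U sig (t, r) = pi_theta Theta U t * gdens sig r"
proof -
  have "pi_state Theta U sig (t, r) = indicator Theta t * exp (- U t) * exp (- (norm r)\<^sup>2 / (2 * sig\<^sup>2)) / Zs"
    unfolding pi_state_def Zs_def by (simp add: exp_diff exp_minus field_simps)
  also have "\<dots> = indicator Theta t * exp (- U t) / Zt * gdens sig r"
    unfolding gdens_sig Zs_eq using Cg_pos by simp
  finally show ?thesis unfolding pi_theta_def Zt_def by simp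
qed

lemma pi_theta_nonneg: "0 \<le> pi_theta Theta U t"
  unfolding pi_theta_def using Z_pos by simp

end

lemma flip_image_times: "flip ` (A \<times> UNIV) = A \<times> UNIV"
  unfolding flip_image by (auto simp: flip_def)

lemma times_UNIV_sets[measurable]:
  "A \<in> sets borel \<Longrightarrow> A \<times> (UNIV::'b set) \<in> sets (borel :: ('a::second_countable_topology \<times> 'b::second_countable_topology) measure)"
  unfolding borel_prod[symmetric] by (rule pair_measureI) auto

lemma flip_image_UNIV: "flip ` UNIV = UNIV"
  using flip_image_times[of UNIV] by simp

context amag_thm
begin

lemma step_meas2: "(\<lambda>(x, \<omega>). amag_step Theta U eps sig beta gU T x \<omega>) \<in> borel \<Otimes>\<^sub>M (PN T \<Otimes>\<^sub>M uniform_measure lborel {0..1}) \<rightarrow>\<^sub>M borel"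
proof -
  have "(\<lambda>t. (if fst (LT T (fst t) (fst (snd t))) \<in> Theta \<and> snd (snd t) < min 1 (exp (U (fst (fst t)) - U (fst (LT T (fst t) (fst (snd t)))) + (WT T (fst t) (fst (snd t)) - kin sig (snd (LT T (fst t) (fst (snd t)))) + kin sig (snd (fst t)))))
     then LT T (fst t) (fst (snd t)) else flip (fst t))) \<in> borel \<Otimes>\<^sub>M (PN T \<Otimes>\<^sub>M uniform_measure lborel {0..1}) \<rightarrow>\<^sub>M borel"
    by measurable
  moreover have "(\<lambda>(x, \<omega>). amag_step Theta U eps sig beta gU T x \<omega>) = (\<lambda>t. (if fst (LT T (fst t) (fst (snd t))) \<in> Theta \<and> snd (snd t) < min 1 (exp (U (fst (fst t)) - U (fst (LT T (fst t) (fst (snd t)))) + (WT T (fst t) (fst (snd t)) - kin sig (snd (LT T (fst t) (fst (snd t)))) + kin sig (snd (fst t)))))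
     then LT T (fst t) (fst (snd t)) else flip (fst t)))"
  proof
    fix t :: "'d st \<times> (nat \<Rightarrow> (real^'d) \<times> 'u) \<times> real"
    obtain x w v where t: "t = (x, w, v)" by (cases t) auto
    show "(\<lambda>(x, \<omega>). amag_step Theta U eps sig beta gU T x \<omega>) t = (if fst (LT T (fst t) (fst (snd t))) \<in> Theta \<and> snd (snd t) < min 1 (exp (U (fst (fst t)) - U (fst (LT T (fst t) (fst (snd t)))) + (WT T (fst t) (fst (snd t)) - kin sig (snd (LT T (fst t) (fst (snd t)))) + kin sig (snd (fst t)))))
     then LT T (fst t) (fst (snd t)) else flip (fst t))"
      unfolding t by (simp only: step_eq case_prod_conv fst_conv snd_conv)
  qed
  ultimately show ?thesis by simp
qed

lemma prob_noise: "prob_space (PN T \<Otimes>\<^sub>M uniform_measure lborel {0..1::real})"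
  by (intro prob_space_pair prob_PN prob_space_uniform_measure) auto

lemma K_UNIV: "Kx x UNIV = 1"
proof -
  interpret NP: prob_space "PN T \<Otimes>\<^sub>M uniform_measure lborel {0..1::real}" by (rule prob_noise)
  have "prob_space (amag_kernel Theta U eps sig beta gU Q T x)"
    unfolding amag_kernel_def noise_eq by (rule NP.prob_space_distr[OF step_meas])
  then show ?thesis using prob_space.emeasure_space_1 by (fastforce simp: amag_kernel_def)
qed

lemma Kx_meas[measurable]: "B \<in> sets borel \<Longrightarrow> (\<lambda>x. Kx x B) \<in> borel_measurable borel"
proof -
  assume B[measurable]: "B \<in> sets borel"
  interpret PT: prob_space "PN T" by (rule prob_PN)
  have "(\<lambda>(x, w). ennreal (indicator B (LT T x w) * acc x w + indicator B (flip x) * (1 - acc x w))) \<in> borel_measurable (borel \<Otimes>\<^sub>M PN T)"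
    unfolding acc_def by measurable
  from PT.borel_measurable_nn_integral_fst[OF this]
  show ?thesis by (simp add: kernel_real[OF B])
qed

lemma pi_pu: "ennreal (indicator A x * (pu x * (1 / Zs))) = indicator A x * ennreal (pi_state Theta U sig x)"
  by (simp add: pi_state_pu indicator_def)

lemma claim3: "\<forall>x. pi_state Theta U sig x = pi_state Theta U sig (flip x)"
  by (simp add: pi_state_pu pu_flip)

lemma claim4:
  assumes A: "A \<in> sets borel" and B: "B \<in> sets borel"
  shows "(\<integral>\<^sup>+ x. indicator A x * ennreal (pi_state Theta U sig x) * Kx x B \<partial>lborel)
      = (\<integral>\<^sup>+ x. indicator (flip ` B) x * ennreal (pi_state Theta U sig x) * Kx x (flip ` A) \<partial>lborel)"
  using master[of "1 / Zs" A B] A B Zs_pos unfolding pi_pu by simp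

lemma claim5:
  assumes B[measurable]: "B \<in> sets borel"
  shows "(\<integral>\<^sup>+ x. ennreal (pi_state Theta U sig x) * Kx x B \<partial>lborel)
      = (\<integral>\<^sup>+ x. indicator B x * ennreal (pi_state Theta U sig x) \<partial>lborel)"
proof -
  have "(\<integral>\<^sup>+ x. ennreal (pi_state Theta U sig x) * Kx x B \<partial>lborel)
      = (\<integral>\<^sup>+ x. indicator UNIV x * ennreal (pi_state Theta U sig x) * Kx x B \<partial>lborel)" by simp
  also have "\<dots> = (\<integral>\<^sup>+ x. indicator (flip ` B) x * ennreal (pi_state Theta U sig x) * Kx x (flip ` UNIV) \<partial>lborel)"
    by (rule claim4) auto
  also have "\<dots> = (\<integral>\<^sup>+ x. indicator B (flip x) * ennreal (pi_state Theta U sig (flip x)) \<partial>lborel)"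
    by (simp add: flip_image_UNIV K_UNIV ind_flip pi_state_pu pu_flip)
  also have "\<dots> = (\<integral>\<^sup>+ x. indicator B x * ennreal (pi_state Theta U sig x) \<partial>lborel)"
  proof -
    have m: "(\<lambda>x. indicator B x * ennreal (pi_state Theta U sig x)) \<in> borel_measurable borel"
      unfolding pi_state_pu by measurable
    show ?thesis using nn_integral_lborel_flip[OF m] by simp
  qed
  finally show ?thesis .
qed

lemma claim6:
  assumes A[measurable]: "A \<in> sets borel"
  shows "(\<integral>\<^sup>+ x. indicator (A \<times> UNIV) x * ennreal (pi_state Theta U sig x) \<partial>lborel)
      = (\<integral>\<^sup>+ th. indicator A th * ennreal (pi_theta Theta U th) \<partial>lborel)"
proof -
  have "(\<integral>\<^sup>+ x. indicator (A \<times> UNIV) x * ennreal (pi_state Theta U sig x) \<partial>lborel)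
      = (\<integral>\<^sup>+ t. \<integral>\<^sup>+ (r::real^'d). indicator (A \<times> UNIV) (t, r) * ennreal (pi_state Theta U sig (t, r)) \<partial>lborel \<partial>lborel)"
    by (rule nn_integral_lborel_pair) (simp add: pi_state_pu)
  also have "\<dots> = (\<integral>\<^sup>+ t. \<integral>\<^sup>+ (r::real^'d). (indicator A t * ennreal (pi_theta Theta U t)) * ennreal (gdens sig r) \<partial>lborel \<partial>lborel)"
    by (intro nn_integral_cong) (simp add: pi_state_split ennreal_mult gdens_nonneg pi_theta_nonneg indicator_times mult_ac)
  also have "\<dots> = (\<integral>\<^sup>+ th. indicator A th * ennreal (pi_theta Theta U th) \<partial>lborel)"
    by (simp add: nn_integral_cmult nn_integral_gdens[OF sig_pos])
  finally show ?thesis .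
qed

end

context amag_thm
begin

abbreviation "Kr th B \<equiv> emeasure (amag_kernel_resample Theta U eps sig beta gU Q T th) B"

lemma resample_eq:
  assumes B[measurable]: "B \<in> sets borel"
  shows "Kr th B = (\<integral>\<^sup>+r. Kx (th, r) (B \<times> UNIV) \<partial>gauss_vec sig)"
proof -
  interpret NP: prob_space "PN T \<Otimes>\<^sub>M uniform_measure lborel {0..1::real}" by (rule prob_noise)
  interpret GS: prob_space "gauss_vec sig :: (real^'d) measure" by (rule prob_space_gauss_vec[OF sig_pos])
  note sm[measurable] = step_meas2
  have fm: "(\<lambda>(r, \<omega>). fst (amag_step Theta U eps sig beta gU T (th, r) \<omega>)) \<in> (gauss_vec sig :: (real^'d) measure) \<Otimes>\<^sub>M (PN T \<Otimes>\<^sub>M uniform_measure lborel {0..1}) \<rightarrow>\<^sub>M borel"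
  proof -
    have "(\<lambda>t. fst (amag_step Theta U eps sig beta gU T (th, fst t) (snd t))) \<in> (gauss_vec sig :: (real^'d) measure) \<Otimes>\<^sub>M (PN T \<Otimes>\<^sub>M uniform_measure lborel {0..1}) \<rightarrow>\<^sub>M borel"
      using meas2[OF step_meas2, of "\<lambda>t. (th, fst t)" "gauss_vec sig \<Otimes>\<^sub>M (PN T \<Otimes>\<^sub>M uniform_measure lborel {0..1})" snd]
      by measurable
    then show ?thesis by (simp add: case_prod_beta')
  qed
  have "Kr th B = (\<integral>\<^sup>+z. indicator B z \<partial>amag_kernel_resample Theta U eps sig beta gU Q T th)"
    using B by (simp add: amag_kernel_resample_def)
  also have "\<dots> = (\<integral>\<^sup>+z. indicator B ((\<lambda>(r, \<omega>). fst (amag_step Theta U eps sig beta gU T (th, r) \<omega>)) z) \<partial>((gauss_vec sig :: (real^'d) measure) \<Otimes>\<^sub>M (PN T \<Otimes>\<^sub>M uniform_measure lborel {0..1})))"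
    unfolding amag_kernel_resample_def noise_eq using fm by (subst nn_integral_distr) auto
  also have "\<dots> = (\<integral>\<^sup>+r. \<integral>\<^sup>+\<omega>. indicator B (fst (amag_step Theta U eps sig beta gU T (th, r) \<omega>)) \<partial>(PN T \<Otimes>\<^sub>M uniform_measure lborel {0..1}) \<partial>gauss_vec sig)"
    using fm by (subst NP.nn_integral_fst[symmetric]) auto
  also have "\<dots> = (\<integral>\<^sup>+r. Kx (th, r) (B \<times> UNIV) \<partial>gauss_vec sig)"
  proof (rule nn_integral_cong)
    fix r :: "real^'d"
    have "Kx (th, r) (B \<times> UNIV) = (\<integral>\<^sup>+\<omega>. indicator (B \<times> UNIV) (amag_step Theta U eps sig beta gU T (th, r) \<omega>) \<partial>(PN T \<Otimes>\<^sub>M uniform_measure lborel {0..1}))"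
    proof -
      have "Kx (th, r) (B \<times> UNIV) = (\<integral>\<^sup>+z. indicator (B \<times> UNIV) z \<partial>amag_kernel Theta U eps sig beta gU Q T (th, r))"
        by (simp add: amag_kernel_def)
      also have "\<dots> = (\<integral>\<^sup>+\<omega>. indicator (B \<times> UNIV) (amag_step Theta U eps sig beta gU T (th, r) \<omega>) \<partial>(PN T \<Otimes>\<^sub>M uniform_measure lborel {0..1}))"
        unfolding amag_kernel_def noise_eq using step_meas by (subst nn_integral_distr) auto
      finally show ?thesis .
    qed
    then show "(\<integral>\<^sup>+\<omega>. indicator B (fst (amag_step Theta U eps sig beta gU T (th, r) \<omega>)) \<partial>(PN T \<Otimes>\<^sub>M uniform_measure lborel {0..1}))
      = Kx (th, r) (B \<times> UNIV)"
      by (simp add: indicator_times)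
  qed
  finally show ?thesis .
qed


lemma pu_split: "ennreal (indicator (A \<times> UNIV) (th, r) * (pu (th, r) * (1 / Zs)))
   = indicator A th * ennreal (pi_theta Theta U th) * ennreal (gdens sig r)"
  unfolding pi_pu pi_state_split
  by (simp add: ennreal_mult gdens_nonneg pi_theta_nonneg indicator_times mult_ac)

lemma res_int:
  assumes A[measurable]: "A \<in> sets borel" and B[measurable]: "B \<in> sets borel"
  shows "(\<integral>\<^sup>+th. indicator A th * ennreal (pi_theta Theta U th) * Kr th B \<partial>lborel)
    = (\<integral>\<^sup>+x. ennreal (indicator (A \<times> UNIV) x * (pu x * (1 / Zs))) * Kx x (B \<times> UNIV) \<partial>lborel)"
proof -
  have "(\<integral>\<^sup>+th. indicator A th * ennreal (pi_theta Theta U th) * Kr th B \<partial>lborel)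
     = (\<integral>\<^sup>+th. \<integral>\<^sup>+(r::real^'d). ennreal (indicator (A \<times> UNIV) (th, r) * (pu (th, r) * (1 / Zs))) * Kx (th, r) (B \<times> UNIV) \<partial>lborel \<partial>lborel)"
  proof (rule nn_integral_cong)
    fix th :: "real^'d"
    have "indicator A th * ennreal (pi_theta Theta U th) * Kr th B
       = indicator A th * ennreal (pi_theta Theta U th) * (\<integral>\<^sup>+r. ennreal (gdens sig r) * Kx (th, r) (B \<times> UNIV) \<partial>lborel)"
      unfolding resample_eq[OF B] gauss_vec_density by (subst nn_integral_density) auto
    also have "\<dots> = (\<integral>\<^sup>+(r::real^'d). ennreal (indicator (A \<times> UNIV) (th, r) * (pu (th, r) * (1 / Zs))) * Kx (th, r) (B \<times> UNIV) \<partial>lborel)"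
      unfolding pu_split
      by (subst nn_integral_cmult[symmetric]) (auto intro!: nn_integral_cong simp: mult_ac)
    finally show "indicator A th * ennreal (pi_theta Theta U th) * Kr th B
       = (\<integral>\<^sup>+(r::real^'d). ennreal (indicator (A \<times> UNIV) (th, r) * (pu (th, r) * (1 / Zs))) * Kx (th, r) (B \<times> UNIV) \<partial>lborel)" .
  qed
  also have "\<dots> = (\<integral>\<^sup>+x. ennreal (indicator (A \<times> UNIV) x * (pu x * (1 / Zs))) * Kx x (B \<times> UNIV) \<partial>lborel)"
    by (rule nn_integral_lborel_pair[symmetric]) measurable
  finally show ?thesis .
qed

lemma claim1:
  assumes A[measurable]: "A \<in> sets borel" and B[measurable]: "B \<in> sets borel"
  shows "(\<integral>\<^sup>+th. indicator A th * ennreal (pi_theta Theta U th) * Kr th B \<partial>lborel)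
    = (\<integral>\<^sup>+th. indicator B th * ennreal (pi_theta Theta U th) * Kr th A \<partial>lborel)"
  unfolding res_int[OF A B] res_int[OF B A]
  using master[of "1 / Zs" "A \<times> UNIV" "B \<times> UNIV"] Zs_pos by (simp add: flip_image_times)

lemma claim2:
  assumes B[measurable]: "B \<in> sets borel"
  shows "(\<integral>\<^sup>+th. ennreal (pi_theta Theta U th) * Kr th B \<partial>lborel)
    = (\<integral>\<^sup>+th. indicator B th * ennreal (pi_theta Theta U th) \<partial>lborel)"
proof -
  have "(\<integral>\<^sup>+th. ennreal (pi_theta Theta U th) * Kr th B \<partial>lborel)
     = (\<integral>\<^sup>+th. indicator UNIV th * ennreal (pi_theta Theta U th) * Kr th B \<partial>lborel)" by simp
  also have "\<dots> = (\<integral>\<^sup>+x. ennreal (indicator (UNIV \<times> UNIV) x * (pu x * (1 / Zs))) * Kx x (B \<times> UNIV) \<partial>lborel)"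
    by (rule res_int) auto
  also have "\<dots> = (\<integral>\<^sup>+x. ennreal (indicator (flip ` (B \<times> UNIV)) x * (pu x * (1 / Zs))) * Kx x (flip ` (UNIV \<times> UNIV)) \<partial>lborel)"
    using Zs_pos by (intro master) auto
  also have "\<dots> = (\<integral>\<^sup>+x. indicator (B \<times> UNIV) x * ennreal (pi_state Theta U sig x) \<partial>lborel)"
    unfolding flip_image_times pi_pu by (simp add: K_UNIV)
  also have "\<dots> = (\<integral>\<^sup>+th. indicator B th * ennreal (pi_theta Theta U th) \<partial>lborel)"
    by (rule claim6[OF B])
  finally show ?thesis .
qed

end

theorem theorem1:
  fixes Theta :: "(real^'d) set" and U :: "(real^'d) \<Rightarrow> real"
    and eps sig beta :: real and T :: nat
    and Q :: "'u measure" and Ut :: "'u \<Rightarrow> (real^'d) \<Rightarrow> real" and gU :: "'u \<Rightarrow> (real^'d) \<Rightarrow> (real^'d)"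
  assumes Theta_meas: "Theta \<in> sets borel"
    and U_diff: "\<And>x. U differentiable (at x)"
    and eps_pos: "eps > 0" and sigma_pos: "sig > 0" and beta_pos: "beta > 0"
    and T_ge: "T \<ge> 1"
    and Q_prob: "prob_space Q"
    and Ut_grad: "\<And>u x. GDERIV (Ut u) x :> gU u x"
    and gU_meas: "(\<lambda>(u, x). gU u x) \<in> measurable (Q \<Otimes>\<^sub>M borel) borel"
    and Z_int: "integrable lborel (\<lambda>t. indicator Theta t * exp (- U t))"
    and Z_pos: "(\<integral>t. indicator Theta t * exp (- U t) \<partial>lborel) > 0"
  shows
    \<comment> \<open>With momentum resampling: chain on theta is reversible w.r.t. pi(theta), which is stationary.\<close>
    "(\<forall>A B. A \<in> sets borel \<longrightarrow> B \<in> sets borel \<longrightarrow> A \<subseteq> Theta \<longrightarrow> B \<subseteq> Theta \<longrightarrow>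
        (\<integral>\<^sup>+ th. indicator A th * ennreal (pi_theta Theta U th) *
            emeasure (amag_kernel_resample Theta U eps sig beta gU Q T th) B \<partial>lborel)
      = (\<integral>\<^sup>+ th. indicator B th * ennreal (pi_theta Theta U th) *
            emeasure (amag_kernel_resample Theta U eps sig beta gU Q T th) A \<partial>lborel))
   \<and> (\<forall>B. B \<in> sets borel \<longrightarrow>
        (\<integral>\<^sup>+ th. ennreal (pi_theta Theta U th) *
            emeasure (amag_kernel_resample Theta U eps sig beta gU Q T th) B \<partial>lborel)
      = (\<integral>\<^sup>+ th. indicator B th * ennreal (pi_theta Theta U th) \<partial>lborel))
    \<comment> \<open>Without resampling: chain on (theta, r) is skew-reversible w.r.t. flip and pi(theta, r),
        pi(theta, r) is stationary, and its theta-marginal is pi(theta).\<close>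
   \<and> (\<forall>x. pi_state Theta U sig x = pi_state Theta U sig (flip x))
   \<and> (\<forall>A B. A \<in> sets borel \<longrightarrow> B \<in> sets borel \<longrightarrow> A \<subseteq> Theta \<times> UNIV \<longrightarrow> B \<subseteq> Theta \<times> UNIV \<longrightarrow>
        (\<integral>\<^sup>+ x. indicator A x * ennreal (pi_state Theta U sig x) *
            emeasure (amag_kernel Theta U eps sig beta gU Q T x) B \<partial>lborel)
      = (\<integral>\<^sup>+ x. indicator (flip ` B) x * ennreal (pi_state Theta U sig x) *
            emeasure (amag_kernel Theta U eps sig beta gU Q T x) (flip ` A) \<partial>lborel))
   \<and> (\<forall>B. B \<in> sets borel \<longrightarrow>
        (\<integral>\<^sup>+ x. ennreal (pi_state Theta U sig x) *
            emeasure (amag_kernel Theta U eps sig beta gU Q T x) B \<partial>lborel)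
      = (\<integral>\<^sup>+ x. indicator B x * ennreal (pi_state Theta U sig x) \<partial>lborel))
   \<and> (\<forall>A. A \<in> sets borel \<longrightarrow>
        (\<integral>\<^sup>+ x. indicator (A \<times> UNIV) x * ennreal (pi_state Theta U sig x) \<partial>lborel)
      = (\<integral>\<^sup>+ th. indicator A th * ennreal (pi_theta Theta U th) \<partial>lborel))"
proof -
  have Um: "U \<in> borel_measurable borel"
    by (intro borel_measurable_continuous_onI differentiable_imp_continuous_on differentiable_at_imp_differentiable_on)
       (use U_diff in auto)
  interpret amag_thm eps sig beta Q gU Theta U T
    using eps_pos sigma_pos beta_pos Q_prob gU_meas Theta_meas Um T_ge Z_int Z_pos
    by (simp add: amag_thm_def amag_full_def amag_loc_def amag_full_axioms_def amag_thm_axioms_def)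
  have c3: "\<And>x. pi_state Theta U sig x = pi_state Theta U sig (flip x)" using claim3 by blast
  show ?thesis
    apply (intro conjI allI impI)
         apply (erule (1) claim1)
        apply (erule claim2)
       apply (rule c3)
      apply (erule (1) claim4)
     apply (erule claim5)
    apply (erule claim6)
    done
qed

end
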